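(* Let $\{A^i\}_{i=1}^N$ and $\{\tilde A^i\}_{i=1}^N$ be injective fMPSs of bond dimension $2n$ with Wall invariant $(+)$, both in canonical form. Then $\{A^i\}_i \sim \{\tilde A^i\}_i$ holds if and only if there exist a unitary matrix $V\in \mathrm{U}(2n)$ and a phase $e^{i\beta}\in \mathrm{U}(1)$ such that $$\tilde A^i = e^{i\beta} V^\dagger A^i V \quad \text{for all } i.$$ In this case $e^{i\beta}$ is unique and $V$ is unique up to multiplication by a $\mathrm{U}(1)$ phase. Moreover, if $u$ and $\tilde u$ are Wall matrices of $\{A^i\}_i$ and $\{\tilde A^i\}_i$ respectively, then $\tilde u = \eta\, V^\dagger u V$ for some sign $\eta\in\{\pm1\}$. All of these statements remain true if the hypothesis $\{A^i\}_i\sim\{\tilde A^i\}_i$ is replaced by $\{A^i\}_i\sim_{\rm PBC}\{\tilde A^i\}_i$.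
   Context: Fix integers $N,n\ge 1$ and a parity function $i\mapsto |i|\in\{0,1\}$ on $\{1,\dots,N\}$. Let $\sigma_x,\sigma_z$ be the Pauli matrices. An fMPS of bond dimension $2n$ is a tuple $\{A^i\}_{i=1}^N$ of complex $2n\times 2n$ matrices for which there is a matrix $Z$ (a grading matrix), unitarily equivalent to $\sigma_z\otimes 1_n$, with $(-1)^{|i|}A^i = Z A^i Z$ for all $i$. It is in canonical form if $\sum_i A^iA^{i\dagger}=1_{2n}$. It is injective with Wall invariant $(+)$ if there is a fixed $l\in\mathbb N$ such that the products $A^{i_1}\cdots A^{i_l}$ over all $(i_1,\dots,i_l)$ span $\mathrm M_{2n}(\mathbb C)$; in that case the grading matrix is unique up to sign and a Wall matrix is $u=\pm Z$ (so $u^2=1$). Two fMPSs are gauge equivalent, $\{A^i\}_i\sim\{\tilde A^i\}_i$, if for every $L\in\mathbb N$ there is $\alpha_L\in\mathbb R$ with $\mathrm{tr}[A^{i_1}\cdots A^{i_L}] = e^{i\alpha_L}\mathrm{tr}[\tilde A^{i_1}\cdots\tilde A^{i_L}]$ for all $i_1,\dots,i_L$. They are gauge equivalent in PBC, $\{A^i\}_i\sim_{\rm PBC}\{\tilde A^i\}_i$, if for every $L$ there is $\alpha_L$ with $\mathrm{tr}[uA^{i_1}\cdots A^{i_L}] = e^{i\alpha_L}\mathrm{tr}[\tilde u\tilde A^{i_1}\cdots\tilde A^{i_L}]$ for all $i_1,\dots,i_L$, where $u,\tilde u$ are the respective Wall matrices. *)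

theory Defs
  imports Complex_Main "Jordan_Normal_Form.Matrix"
begin

definition adj :: "complex mat \<Rightarrow> complex mat" where
  "adj M = mat (dim_col M) (dim_row M) (\<lambda>(i,j). cnj (M $$ (j,i)))"

definition mtrace :: "complex mat \<Rightarrow> complex" where
  "mtrace M = (\<Sum>i<dim_row M. M $$ (i,i))"

definition unitary_mat :: "nat \<Rightarrow> complex mat \<Rightarrow> bool" where
  "unitary_mat d U \<longleftrightarrow> U \<in> carrier_mat d d \<and> adj U * U = 1\<^sub>m d \<and> U * adj U = 1\<^sub>m d"

definition sigmaz_tensor_id :: "nat \<Rightarrow> complex mat" where
  "sigmaz_tensor_id n = mat (2*n) (2*n) (\<lambda>(i,j). if i = j then (if i < n then 1 else -1) else 0)"

definition words :: "nat \<Rightarrow> nat \<Rightarrow> nat list set" where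
  "words N L = {w. length w = L \<and> set w \<subseteq> {1..N}}"

definition wprod :: "nat \<Rightarrow> (nat \<Rightarrow> complex mat) \<Rightarrow> nat list \<Rightarrow> complex mat" where
  "wprod d A w = foldr (\<lambda>i M. A i * M) w (1\<^sub>m d)"

definition grading_matrix :: "nat \<Rightarrow> nat \<Rightarrow> (nat \<Rightarrow> nat) \<Rightarrow> (nat \<Rightarrow> complex mat) \<Rightarrow> complex mat \<Rightarrow> bool" where
  "grading_matrix N n par A Z \<longleftrightarrow>
     Z \<in> carrier_mat (2*n) (2*n) \<and>
     (\<exists>U. unitary_mat (2*n) U \<and> Z = U * sigmaz_tensor_id n * adj U) \<and>
     (\<forall>i\<in>{1..N}. (-1) ^ par i \<cdot>\<^sub>m A i = Z * A i * Z)"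

definition fMPS :: "nat \<Rightarrow> nat \<Rightarrow> (nat \<Rightarrow> nat) \<Rightarrow> (nat \<Rightarrow> complex mat) \<Rightarrow> bool" where
  "fMPS N n par A \<longleftrightarrow>
     (\<forall>i\<in>{1..N}. A i \<in> carrier_mat (2*n) (2*n)) \<and> (\<exists>Z. grading_matrix N n par A Z)"

definition canonical_form :: "nat \<Rightarrow> nat \<Rightarrow> (nat \<Rightarrow> complex mat) \<Rightarrow> bool" where
  "canonical_form N n A \<longleftrightarrow>
     mat (2*n) (2*n) (\<lambda>(r,c). \<Sum>i\<in>{1..N}. (A i * adj (A i)) $$ (r,c)) = 1\<^sub>m (2*n)"

(* injective with Wall invariant (+): for some fixed l, the products of length l
   span M_{2n}(C) (complex linear span, written out entrywise) *)
definition injective_plus :: "nat \<Rightarrow> nat \<Rightarrow> (nat \<Rightarrow> complex mat) \<Rightarrow> bool" where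
  "injective_plus N n A \<longleftrightarrow>
     (\<exists>l::nat. \<forall>M \<in> carrier_mat (2*n) (2*n). \<exists>c :: nat list \<Rightarrow> complex.
        M = mat (2*n) (2*n) (\<lambda>(r,s). \<Sum>w\<in>words N l. c w * wprod (2*n) A w $$ (r,s)))"

definition wall_matrix :: "nat \<Rightarrow> nat \<Rightarrow> (nat \<Rightarrow> nat) \<Rightarrow> (nat \<Rightarrow> complex mat) \<Rightarrow> complex mat \<Rightarrow> bool" where
  "wall_matrix N n par A u \<longleftrightarrow> (\<exists>Z. grading_matrix N n par A Z \<and> (u = Z \<or> u = - Z))"

definition gauge_equiv :: "nat \<Rightarrow> nat \<Rightarrow> (nat \<Rightarrow> complex mat) \<Rightarrow> (nat \<Rightarrow> complex mat) \<Rightarrow> bool" where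
  "gauge_equiv N n A B \<longleftrightarrow>
     (\<forall>L::nat. \<exists>\<alpha>::real. \<forall>w\<in>words N L.
        mtrace (wprod (2*n) A w) = exp (\<i> * of_real \<alpha>) * mtrace (wprod (2*n) B w))"

definition gauge_equiv_PBC :: "nat \<Rightarrow> nat \<Rightarrow> (nat \<Rightarrow> nat) \<Rightarrow> (nat \<Rightarrow> complex mat) \<Rightarrow> (nat \<Rightarrow> complex mat) \<Rightarrow> bool" where
  "gauge_equiv_PBC N n par A B \<longleftrightarrow>
     (\<exists>u v. wall_matrix N n par A u \<and> wall_matrix N n par B v \<and>
       (\<forall>L::nat. \<exists>\<alpha>::real. \<forall>w\<in>words N L.
          mtrace (u * wprod (2*n) A w) = exp (\<i> * of_real \<alpha>) * mtrace (v * wprod (2*n) B w)))"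

definition gauge_transform :: "nat \<Rightarrow> nat \<Rightarrow> (nat \<Rightarrow> complex mat) \<Rightarrow> (nat \<Rightarrow> complex mat) \<Rightarrow> complex mat \<Rightarrow> real \<Rightarrow> bool" where
  "gauge_transform N n A B V \<beta> \<longleftrightarrow>
     unitary_mat (2*n) V \<and> (\<forall>i\<in>{1..N}. B i = exp (\<i> * of_real \<beta>) \<cdot>\<^sub>m (adj V * A i * V))"

end

theory Submission
  imports Defs "Jordan_Normal_Form.Determinant"
begin

lemma mult_entry:
  assumes "A \<in> carrier_mat r k" "B \<in> carrier_mat k c" "i < r" "j < c"
  shows "(A * B) $$ (i,j) = (\<Sum>t<k. A $$ (i,t) * B $$ (t,j))"
  using assms by (auto simp: scalar_prod_def lessThan_atLeast0)

lemma row_col_sprod[simp]: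
  assumes "i < dim_row A" "j < dim_col B" "dim_col A = dim_row B"
  shows "row A i \<bullet> col B j = (\<Sum>t<dim_row B. A $$ (i,t) * B $$ (t,j))"
  using assms by (auto simp: scalar_prod_def lessThan_atLeast0)

lemma adj_carrier[simp]: "A \<in> carrier_mat r c \<Longrightarrow> adj A \<in> carrier_mat c r"
  by (auto simp: adj_def)
lemma adj_dims[simp]: "dim_row (adj A) = dim_col A" "dim_col (adj A) = dim_row A"
  by (auto simp: adj_def)
lemma adj_index[simp]: "i < dim_col A \<Longrightarrow> j < dim_row A \<Longrightarrow> adj A $$ (i,j) = cnj (A $$ (j,i))"
  by (auto simp: adj_def)

lemma adj_adj[simp]: "adj (adj A) = A"
  by (rule eq_matI) auto

lemma adj_mult:
  assumes "A \<in> carrier_mat r k" "B \<in> carrier_mat k c"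
  shows "adj (A * B) = adj B * adj A"
proof (rule eq_matI)
  fix i j assume "i < dim_row (adj B * adj A)" "j < dim_col (adj B * adj A)"
  then have ij: "i < c" "j < r" using assms by auto
  show "adj (A * B) $$ (i, j) = (adj B * adj A) $$ (i, j)"
    using assms ij
    by (simp add: mult.commute)
qed (use assms in auto)

lemma adj_one[simp]: "adj (1\<^sub>m d) = 1\<^sub>m d"
  by (rule eq_matI) auto

lemma adj_smult: "adj (a \<cdot>\<^sub>m A) = cnj a \<cdot>\<^sub>m adj A"
  by (rule eq_matI) auto

lemma adj_add: "A \<in> carrier_mat r c \<Longrightarrow> B \<in> carrier_mat r c \<Longrightarrow> adj (A + B) = adj A + adj B"
  by (rule eq_matI) auto

lemma adj_minus: "A \<in> carrier_mat r c \<Longrightarrow> B \<in> carrier_mat r c \<Longrightarrow> adj (A - B) = adj A - adj B"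
  by (rule eq_matI) auto

lemma adj_zero[simp]: "adj (0\<^sub>m r c) = 0\<^sub>m c r"
  by (rule eq_matI) auto

lemma mtrace_alt: "A \<in> carrier_mat d d \<Longrightarrow> mtrace A = (\<Sum>i<d. A $$ (i,i))"
  by (simp add: mtrace_def)

lemma mtrace_mult_comm:
  assumes "A \<in> carrier_mat r c" "B \<in> carrier_mat c r"
  shows "mtrace (A * B) = mtrace (B * A)"
proof -
  have "mtrace (A * B) = (\<Sum>i<r. \<Sum>t<c. A $$ (i,t) * B $$ (t,i))"
    using assms by (simp add: mtrace_def mult_entry[of _ r c _ r])
  also have "\<dots> = (\<Sum>t<c. \<Sum>i<r. B $$ (t,i) * A $$ (i,t))"
    by (subst sum.swap) (simp add: mult.commute)
  also have "\<dots> = mtrace (B * A)"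
    using assms by (simp add: mtrace_def mult_entry[of _ c r _ c])
  finally show ?thesis .
qed

lemma mtrace_add: "A \<in> carrier_mat d d \<Longrightarrow> B \<in> carrier_mat d d \<Longrightarrow> mtrace (A + B) = mtrace A + mtrace B"
  by (simp add: mtrace_def sum.distrib)
lemma mtrace_minus: "A \<in> carrier_mat d d \<Longrightarrow> B \<in> carrier_mat d d \<Longrightarrow> mtrace (A - B) = mtrace A - mtrace B"
  by (simp add: mtrace_def sum_subtractf)
lemma mtrace_smult: "A \<in> carrier_mat d d \<Longrightarrow> mtrace (a \<cdot>\<^sub>m A) = a * mtrace A"
  by (simp add: mtrace_def sum_distrib_left)
lemma mtrace_one[simp]: "mtrace (1\<^sub>m d) = of_nat d"
  by (simp add: mtrace_def)
lemma mtrace_zero[simp]: "mtrace (0\<^sub>m d d) = 0"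
  by (simp add: mtrace_def)

lemma cnj_mtrace: "A \<in> carrier_mat d d \<Longrightarrow> cnj (mtrace A) = mtrace (adj A)"
  by (simp add: mtrace_def)

lemma mtrace_adj_self:
  assumes "X \<in> carrier_mat r c"
  shows "mtrace (adj X * X) = of_real (\<Sum>j<c. \<Sum>i<r. (cmod (X $$ (i,j)))\<^sup>2)"
proof -
  have "mtrace (adj X * X) = (\<Sum>j<c. (adj X * X) $$ (j,j))"
    using assms by (simp add: mtrace_def)
  also have "\<dots> = (\<Sum>j<c. \<Sum>i<r. cnj (X $$ (i,j)) * X $$ (i,j))"
    by (rule sum.cong, simp, subst mult_entry[of _ c r _ c], use assms in auto)
  also have "\<dots> = (\<Sum>j<c. \<Sum>i<r. of_real ((cmod (X $$ (i,j)))\<^sup>2))"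
    by (simp add: complex_norm_square mult.commute del: of_real_power)
  finally show ?thesis by simp
qed

lemma mtrace_adj_self_Re:
  assumes "X \<in> carrier_mat r c"
  shows "Im (mtrace (adj X * X)) = 0" "Re (mtrace (adj X * X)) \<ge> 0"
  using mtrace_adj_self[OF assms] by (auto intro!: sum_nonneg)

lemma mtrace_adj_self_zero:
  assumes "X \<in> carrier_mat r c" "mtrace (adj X * X) = 0"
  shows "X = 0\<^sub>m r c"
proof (rule eq_matI)
  have "complex_of_real (\<Sum>j<c. \<Sum>i<r. (cmod (X $$ (i,j)))\<^sup>2) = 0"
    using mtrace_adj_self[OF assms(1)] assms(2) by metis
  then have "(\<Sum>j<c. \<Sum>i<r. (cmod (X $$ (i,j)))\<^sup>2) = 0" by (simp only: of_real_eq_0_iff)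
  then have "\<forall>j\<in>{..<c}. (\<Sum>i<r. (cmod (X $$ (i,j)))\<^sup>2) = 0"
    by (subst (asm) sum_nonneg_eq_0_iff) (auto intro!: sum_nonneg)
  then have "\<forall>j<c. \<forall>i<r. (cmod (X $$ (i,j)))\<^sup>2 = 0"
    by (auto simp: sum_nonneg_eq_0_iff)
  then show "\<And>i j. i < dim_row (0\<^sub>m r c) \<Longrightarrow> j < dim_col (0\<^sub>m r c) \<Longrightarrow> X $$ (i, j) = 0\<^sub>m r c $$ (i, j)"
    by auto
qed (use assms in auto)

lemma wprod_Nil[simp]: "wprod d A [] = 1\<^sub>m d" by (simp add: wprod_def)
lemma wprod_Cons[simp]: "wprod d A (i # w) = A i * wprod d A w" by (simp add: wprod_def)

lemma wprod_carrier: "(\<forall>i\<in>set w. A i \<in> carrier_mat d d) \<Longrightarrow> wprod d A w \<in> carrier_mat d d"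
  by (induction w) auto

lemma wprod_append:
  assumes "\<forall>i\<in>set w. A i \<in> carrier_mat d d" "\<forall>i\<in>set v. A i \<in> carrier_mat d d"
  shows "wprod d A (w @ v) = wprod d A w * wprod d A v"
  using assms
proof (induction w)
  case Nil
  then show ?case using wprod_carrier[of v A d] by simp
next
  case (Cons i w)
  then show ?case using wprod_carrier[of v A d] wprod_carrier[of w A d]
    by (simp add: assoc_mult_mat[of _ d d _ d _ d])
qed

lemma words_finite[simp]: "finite (words N L)"
proof -
  have "words N L \<subseteq> {w. set w \<subseteq> {1..N} \<and> length w = L}" by (auto simp: words_def)
  thus ?thesis using finite_lists_length_eq[of "{1..N}" L] finite_subset by blast
qed

lemma words_mem: "w \<in> words N L \<longleftrightarrow> length w = L \<and> set w \<subseteq> {1..N}"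
  by (simp add: words_def)

lemma sum_words_add:
  "(\<Sum>u\<in>words N (m+k). f u) = (\<Sum>w\<in>words N m. \<Sum>v\<in>words N k. f (w @ v))"
proof -
  have bij: "bij_betw (\<lambda>(w,v). w @ v) (words N m \<times> words N k) (words N (m+k))"
  proof (rule bij_betwI')
    fix x y assume "x \<in> words N m \<times> words N k" "y \<in> words N m \<times> words N k"
    then show "((case x of (w, v) \<Rightarrow> w @ v) = (case y of (w, v) \<Rightarrow> w @ v)) = (x = y)"
      by (cases x; cases y) (auto simp: words_def)
  next
    fix x assume "x \<in> words N m \<times> words N k"
    then show "(case x of (w, v) \<Rightarrow> w @ v) \<in> words N (m + k)" by (auto simp: words_def)
  next
    fix u assume u: "u \<in> words N (m + k)"
    show "\<exists>x\<in>words N m \<times> words N k. u = (case x of (w, v) \<Rightarrow> w @ v)"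
      using u by (intro bexI[of _ "(take m u, drop m u)"])
        (auto simp: words_def dest: in_set_takeD in_set_dropD)
  qed
  have "(\<Sum>u\<in>words N (m+k). f u) = (\<Sum>x\<in>words N m \<times> words N k. f (case x of (w, v) \<Rightarrow> w @ v))"
    using sum.reindex_bij_betw[OF bij, of f] by simp
  also have "\<dots> = (\<Sum>w\<in>words N m. \<Sum>v\<in>words N k. f (w @ v))"
    by (simp add: sum.cartesian_product split_def)
  finally show ?thesis .
qed

lemma words_1: "words N 1 = (\<lambda>i. [i]) ` {1..N}"
proof -
  have "w \<in> words N 1 \<longleftrightarrow> (\<exists>i\<in>{1..N}. w = [i])" for w
    by (cases w) (auto simp: words_def)
  then show ?thesis by auto
qed

definition msum :: "nat \<Rightarrow> ('b \<Rightarrow> complex mat) \<Rightarrow> 'b set \<Rightarrow> complex mat" where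
  "msum d F I = mat d d (\<lambda>(r,s). \<Sum>i\<in>I. F i $$ (r,s))"

lemma msum_carrier[simp]: "msum d F I \<in> carrier_mat d d" by (simp add: msum_def)
lemma msum_dims[simp]: "dim_row (msum d F I) = d" "dim_col (msum d F I) = d" by (simp_all add: msum_def)
lemma msum_index[simp]: "r < d \<Longrightarrow> s < d \<Longrightarrow> msum d F I $$ (r,s) = (\<Sum>i\<in>I. F i $$ (r,s))"
  by (simp add: msum_def)

lemma mult_msum:
  assumes "X \<in> carrier_mat d d" "\<forall>i\<in>I. F i \<in> carrier_mat d d"
  shows "X * msum d F I = msum d (\<lambda>i. X * F i) I"
proof (rule eq_matI)
  fix r s assume rs: "r < dim_row (msum d (\<lambda>i. X * F i) I)" "s < dim_col (msum d (\<lambda>i. X * F i) I)"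
  then have rs: "r < d" "s < d" by auto
  have "(\<Sum>i\<in>I. (X * F i) $$ (r,s)) = (\<Sum>i\<in>I. \<Sum>t<d. X $$ (r,t) * F i $$ (t,s))"
    using assms rs by (intro sum.cong) auto
  also have "\<dots> = (\<Sum>t<d. \<Sum>i\<in>I. X $$ (r,t) * F i $$ (t,s))" by (rule sum.swap)
  finally show "(X * msum d F I) $$ (r, s) = msum d (\<lambda>i. X * F i) I $$ (r, s)"
    using assms rs by (simp add: sum_distrib_left)
qed (use assms in auto)

lemma msum_mult:
  assumes "Y \<in> carrier_mat d d" "\<forall>i\<in>I. F i \<in> carrier_mat d d"
  shows "msum d F I * Y = msum d (\<lambda>i. F i * Y) I"
proof (rule eq_matI)
  fix r s assume rs: "r < dim_row (msum d (\<lambda>i. F i * Y) I)" "s < dim_col (msum d (\<lambda>i. F i * Y) I)"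
  then have rs: "r < d" "s < d" by auto
  have "(\<Sum>i\<in>I. (F i * Y) $$ (r,s)) = (\<Sum>i\<in>I. \<Sum>t<d. F i $$ (r,t) * Y $$ (t,s))"
    using assms rs by (intro sum.cong) auto
  also have "\<dots> = (\<Sum>t<d. \<Sum>i\<in>I. F i $$ (r,t) * Y $$ (t,s))" by (rule sum.swap)
  finally show "(msum d F I * Y) $$ (r, s) = msum d (\<lambda>i. F i * Y) I $$ (r, s)"
    using assms rs by (simp add: sum_distrib_right)
qed (use assms in auto)

lemma mtrace_msum: "\<forall>i\<in>I. F i \<in> carrier_mat d d \<Longrightarrow> mtrace (msum d F I) = (\<Sum>i\<in>I. mtrace (F i))"
  unfolding mtrace_def by (simp, subst sum.swap, intro sum.cong, auto)

lemma msum_cong: "(\<And>i. i \<in> I \<Longrightarrow> F i = G i) \<Longrightarrow> msum d F I = msum d G I"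
  by (simp add: msum_def)

lemma msum_smult:
  assumes "\<forall>i\<in>I. F i \<in> carrier_mat d d"
  shows "a \<cdot>\<^sub>m msum d F I = msum d (\<lambda>i. a \<cdot>\<^sub>m F i) I"
  by (rule eq_matI) (use assms in \<open>auto simp: sum_distrib_left intro!: sum.cong\<close>)

lemma adj_msum:
  assumes "\<forall>i\<in>I. F i \<in> carrier_mat d d"
  shows "adj (msum d F I) = msum d (\<lambda>i. adj (F i)) I"
  by (rule eq_matI) (use assms in \<open>auto intro!: sum.cong\<close>)

lemma msum_swap: "msum d (\<lambda>i. msum d (G i) J) I = msum d (\<lambda>j. msum d (\<lambda>i. G i j) I) J"
  by (rule eq_matI) (auto intro: sum.swap)

lemma msum_plus: "\<forall>i\<in>I. G i \<in> carrier_mat d d \<Longrightarrow> msum d F I + msum d G I = msum d (\<lambda>i. F i + G i) I"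
  by (rule eq_matI) (auto simp: sum.distrib[symmetric] intro!: sum.cong)

definition emat :: "nat \<Rightarrow> nat \<Rightarrow> nat \<Rightarrow> complex mat" where
  "emat d j k = mat d d (\<lambda>(r,s). if r = j \<and> s = k then 1 else 0)"

lemma emat_carrier[simp]: "emat d j k \<in> carrier_mat d d" by (simp add: emat_def)
lemma emat_dims[simp]: "dim_row (emat d j k) = d" "dim_col (emat d j k) = d" by (simp_all add: emat_def)
lemma emat_index[simp]: "r < d \<Longrightarrow> s < d \<Longrightarrow> emat d j k $$ (r,s) = (if r = j \<and> s = k then 1 else 0)"
  by (simp add: emat_def)

lemma mtrace_mult_emat:
  assumes "Y \<in> carrier_mat d d" "i < d" "j < d"
  shows "mtrace (Y * emat d j i) = Y $$ (i,j)"
proof -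
  have "mtrace (Y * emat d j i) = (\<Sum>r<d. \<Sum>t<d. Y $$ (r,t) * (if t = j \<and> r = i then 1 else 0))"
    using assms by (simp add: mtrace_def)
  also have "\<dots> = (\<Sum>r<d. if r = i then Y $$ (r,j) else 0)"
  proof (rule sum.cong)
    fix r assume "r \<in> {..<d}"
    have "(\<Sum>t<d. Y $$ (r,t) * (if t = j \<and> r = i then 1 else 0)) = (\<Sum>t<d. if t = j then (if r = i then Y $$ (r,t) else 0) else 0)"
      by (intro sum.cong) auto
    also have "\<dots> = (if r = i then Y $$ (r,j) else 0)" using assms by simp
    finally show "(\<Sum>t<d. Y $$ (r,t) * (if t = j \<and> r = i then 1 else 0)) = (if r = i then Y $$ (r,j) else 0)" .
  qed simp
  also have "\<dots> = Y $$ (i,j)" using assms by simp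
  finally show ?thesis .
qed

lemma trace_nondeg:
  assumes "Y \<in> carrier_mat d d" "\<And>M. M \<in> carrier_mat d d \<Longrightarrow> mtrace (Y * M) = 0"
  shows "Y = 0\<^sub>m d d"
proof (rule eq_matI)
  fix i j assume "i < dim_row (0\<^sub>m d d :: complex mat)" "j < dim_col (0\<^sub>m d d :: complex mat)"
  then show "Y $$ (i,j) = 0\<^sub>m d d $$ (i,j)"
    using mtrace_mult_emat[OF assms(1), of i j] assms(2)[of "emat d j i"] by simp
qed (use assms in auto)

lemma sandwich_zero:
  fixes X Y :: "complex mat"
  assumes "X \<in> carrier_mat d d" "Y \<in> carrier_mat d d" "X \<noteq> 0\<^sub>m d d"
    and "\<And>M. M \<in> carrier_mat d d \<Longrightarrow> X * M * Y = 0\<^sub>m d d"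
  shows "Y = 0\<^sub>m d d"
proof -
  obtain a b where ab: "a < d" "b < d" "X $$ (a,b) \<noteq> 0"
    using assms(1,3) by (metis carrier_matD(1,2) eq_matI index_zero_mat(1,2,3))
  show ?thesis
  proof (rule eq_matI)
    fix j k assume jk: "j < dim_row (0\<^sub>m d d :: complex mat)" "k < dim_col (0\<^sub>m d d :: complex mat)"
    have "(X * emat d b j * Y) $$ (a,k) = 0" using assms(4)[of "emat d b j"] ab jk by simp
    moreover have "(X * emat d b j * Y) $$ (a,k) = (\<Sum>t<d. (\<Sum>u<d. X $$ (a,u) * (if u = b \<and> t = j then 1 else 0)) * Y $$ (t,k))"
      using assms ab jk by simp
    moreover have "\<dots> = X $$ (a,b) * Y $$ (j,k)"
    proof -
      have "\<And>t. t < d \<Longrightarrow> (\<Sum>u<d. X $$ (a,u) * (if u = b \<and> t = j then 1 else 0)) = (if t = j then X $$ (a,b) else 0)"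
        using ab by (auto simp: if_distrib cong: if_cong)
      then have "(\<Sum>t<d. (\<Sum>u<d. X $$ (a,u) * (if u = b \<and> t = j then 1 else 0)) * Y $$ (t,k))
          = (\<Sum>t<d. (if t = j then X $$ (a,b) * Y $$ (t,k) else 0))"
        by (intro sum.cong) auto
      also have "\<dots> = X $$ (a,b) * Y $$ (j,k)" using jk by simp
      finally show ?thesis .
    qed
    ultimately show "Y $$ (j,k) = 0\<^sub>m d d $$ (j,k)" using ab jk by simp
  qed (use assms in auto)
qed

definition comb :: "nat \<Rightarrow> nat \<Rightarrow> (nat \<Rightarrow> complex mat) \<Rightarrow> nat \<Rightarrow> (nat list \<Rightarrow> complex) \<Rightarrow> complex mat" where
  "comb d N A m a = msum d (\<lambda>w. a w \<cdot>\<^sub>m wprod d A w) (words N m)"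

definition spans :: "nat \<Rightarrow> nat \<Rightarrow> (nat \<Rightarrow> complex mat) \<Rightarrow> nat \<Rightarrow> bool" where
  "spans d N A m \<longleftrightarrow> (\<forall>M\<in>carrier_mat d d. \<exists>a. M = comb d N A m a)"

definition carr :: "nat \<Rightarrow> nat \<Rightarrow> (nat \<Rightarrow> complex mat) \<Rightarrow> bool" where
  "carr d N A \<longleftrightarrow> (\<forall>i\<in>{1..N}. A i \<in> carrier_mat d d)"

lemma carr_wprod: "carr d N A \<Longrightarrow> w \<in> words N m \<Longrightarrow> wprod d A w \<in> carrier_mat d d"
  by (rule wprod_carrier) (auto simp: carr_def words_def)

lemma carr_wprod': "carr d N A \<Longrightarrow> set w \<subseteq> {1..N} \<Longrightarrow> wprod d A w \<in> carrier_mat d d"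
  by (rule wprod_carrier) (auto simp: carr_def)

lemma comb_carrier[simp]: "comb d N A m a \<in> carrier_mat d d"
  by (simp add: comb_def)
lemma comb_dims[simp]: "dim_row (comb d N A m a) = d" "dim_col (comb d N A m a) = d"
  by (simp_all add: comb_def)

lemma comb_index:
  assumes "carr d N A" "r < d" "s < d"
  shows "comb d N A m a $$ (r,s) = (\<Sum>w\<in>words N m. a w * wprod d A w $$ (r,s))"
  unfolding comb_def msum_index[OF assms(2,3)]
proof (rule sum.cong)
  fix w assume "w \<in> words N m"
  then have "wprod d A w \<in> carrier_mat d d" using carr_wprod[OF assms(1)] by auto
  then show "(a w \<cdot>\<^sub>m wprod d A w) $$ (r, s) = a w * wprod d A w $$ (r, s)" using assms by auto
qed simp

lemma comb_mult:
  assumes A: "carr d N A"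
  shows "comb d N A m a * comb d N A k b = comb d N A (m+k) (\<lambda>u. a (take m u) * b (drop m u))"
proof (rule eq_matI)
  fix r s assume "r < dim_row (comb d N A (m+k) (\<lambda>u. a (take m u) * b (drop m u)))"
    "s < dim_col (comb d N A (m+k) (\<lambda>u. a (take m u) * b (drop m u)))"
  then have rs: "r < d" "s < d" by auto
  have "comb d N A (m+k) (\<lambda>u. a (take m u) * b (drop m u)) $$ (r,s)
     = (\<Sum>w\<in>words N m. \<Sum>v\<in>words N k. a (take m (w@v)) * b (drop m (w@v)) * wprod d A (w@v) $$ (r,s))"
    unfolding comb_index[OF A rs] by (rule sum_words_add)
  also have "\<dots> = (\<Sum>w\<in>words N m. \<Sum>v\<in>words N k. \<Sum>t<d. (a w * wprod d A w $$ (r,t)) * (b v * wprod d A v $$ (t,s)))"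
  proof (intro sum.cong refl)
    fix w v assume w: "w \<in> words N m" and v: "v \<in> words N k"
    have wc: "wprod d A w \<in> carrier_mat d d" and vc: "wprod d A v \<in> carrier_mat d d"
      using carr_wprod[OF A] w v by auto
    have "wprod d A (w@v) = wprod d A w * wprod d A v"
      using w v A by (intro wprod_append) (auto simp: carr_def words_def)
    then show "a (take m (w@v)) * b (drop m (w@v)) * wprod d A (w@v) $$ (r,s)
       = (\<Sum>t<d. (a w * wprod d A w $$ (r,t)) * (b v * wprod d A v $$ (t,s)))"
      using w wc vc rs by (simp add: words_def sum_distrib_left algebra_simps del: append_eq_conv_conj)
  qed
  also have "\<dots> = (\<Sum>t<d. (\<Sum>w\<in>words N m. a w * wprod d A w $$ (r,t)) * (\<Sum>v\<in>words N k. b v * wprod d A v $$ (t,s)))"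
  proof -
    have "(\<Sum>t<d. (\<Sum>w\<in>words N m. a w * wprod d A w $$ (r,t)) * (\<Sum>v\<in>words N k. b v * wprod d A v $$ (t,s)))
        = (\<Sum>t<d. \<Sum>w\<in>words N m. \<Sum>v\<in>words N k. (a w * wprod d A w $$ (r,t)) * (b v * wprod d A v $$ (t,s)))"
      by (simp only: sum_product)
    also have "\<dots> = (\<Sum>w\<in>words N m. \<Sum>t<d. \<Sum>v\<in>words N k. (a w * wprod d A w $$ (r,t)) * (b v * wprod d A v $$ (t,s)))"
      by (rule sum.swap)
    also have "\<dots> = (\<Sum>w\<in>words N m. \<Sum>v\<in>words N k. \<Sum>t<d. (a w * wprod d A w $$ (r,t)) * (b v * wprod d A v $$ (t,s)))"
      by (rule sum.cong, simp, rule sum.swap)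
    finally show ?thesis by simp
  qed
  also have "\<dots> = (comb d N A m a * comb d N A k b) $$ (r,s)"
    using rs by (simp add: comb_index[OF A])
  finally show "(comb d N A m a * comb d N A k b) $$ (r, s) = comb d N A (m+k) (\<lambda>u. a (take m u) * b (drop m u)) $$ (r, s)"
    by simp
qed auto

lemma comb_lin:
  assumes A: "carr d N A" and J: "finite J"
  shows "msum d (\<lambda>j. s j \<cdot>\<^sub>m comb d N A m (a j)) J = comb d N A m (\<lambda>w. \<Sum>j\<in>J. s j * a j w)"
proof (rule eq_matI)
  fix r c assume "r < dim_row (comb d N A m (\<lambda>w. \<Sum>j\<in>J. s j * a j w))" "c < dim_col (comb d N A m (\<lambda>w. \<Sum>j\<in>J. s j * a j w))"
  then have rc: "r < d" "c < d" by auto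
  show "msum d (\<lambda>j. s j \<cdot>\<^sub>m comb d N A m (a j)) J $$ (r, c) = comb d N A m (\<lambda>w. \<Sum>j\<in>J. s j * a j w) $$ (r, c)"
    using rc by (simp add: comb_index[OF A] sum_distrib_left sum_distrib_right sum.swap[of _ J] mult.assoc)
qed auto

lemma comb_add:
  assumes A: "carr d N A"
  shows "comb d N A m a + comb d N A m b = comb d N A m (\<lambda>w. a w + b w)"
  by (rule eq_matI) (auto simp: comb_index[OF A] sum.distrib algebra_simps)

lemma comb_sub:
  assumes A: "carr d N A"
  shows "comb d N A m a - comb d N A m b = comb d N A m (\<lambda>w. a w - b w)"
  by (rule eq_matI) (auto simp: comb_index[OF A] sum_subtractf algebra_simps)

lemma comb_smult:
  assumes A: "carr d N A"
  shows "s \<cdot>\<^sub>m comb d N A m a = comb d N A m (\<lambda>w. s * a w)"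
  by (rule eq_matI) (auto simp: comb_index[OF A] sum_distrib_left algebra_simps)

lemma comb_eq_sub0:
  assumes A: "carr d N A" and "comb d N A m a = comb d N A m b"
  shows "comb d N A m (\<lambda>w. a w - b w) = 0\<^sub>m d d"
proof -
  have "comb d N A m (\<lambda>w. a w - b w) = comb d N A m b - comb d N A m b"
    using comb_sub[OF A, of m a b] assms(2) by simp
  also have "\<dots> = 0\<^sub>m d d" by (rule eq_matI) auto
  finally show ?thesis .
qed

lemma comb_sub0_eq:
  assumes A: "carr d N A" and "comb d N A m (\<lambda>w. a w - b w) = 0\<^sub>m d d"
  shows "comb d N A m a = comb d N A m b"
proof (rule eq_matI)
  fix r s assume "r < dim_row (comb d N A m b)" "s < dim_col (comb d N A m b)"
  then have rs: "r < d" "s < d" by auto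
  have "(comb d N A m a - comb d N A m b) $$ (r,s) = 0" using comb_sub[OF A, of m a b] assms(2) rs by simp
  then show "comb d N A m a $$ (r,s) = comb d N A m b $$ (r,s)" using rs by simp
qed auto

lemma mult_comb:
  assumes A: "carr d N A" and X: "X \<in> carrier_mat d d"
  shows "X * comb d N A m a = msum d (\<lambda>w. a w \<cdot>\<^sub>m (X * wprod d A w)) (words N m)"
  unfolding comb_def using X carr_wprod[OF A]
  by (subst mult_msum[of _ d]) (auto intro!: msum_cong mult_smult_distrib[of _ d d _ d])

lemma comb_mult_right:
  assumes A: "carr d N A" and X: "X \<in> carrier_mat d d"
  shows "comb d N A m a * X = msum d (\<lambda>w. a w \<cdot>\<^sub>m (wprod d A w * X)) (words N m)"
  unfolding comb_def using X carr_wprod[OF A]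
  by (subst msum_mult[of _ d]) (auto intro!: msum_cong mult_smult_assoc_mat[of _ d d _ d])

lemma mtrace_comb_left:
  assumes A: "carr d N A" and X: "X \<in> carrier_mat d d"
  shows "mtrace (X * comb d N A m a) = (\<Sum>w\<in>words N m. a w * mtrace (X * wprod d A w))"
  using mult_comb[OF A X] carr_wprod[OF A] X
  by (simp add: mtrace_msum) (auto intro!: sum.cong mtrace_smult[of _ d])

lemma one_smult_mat'[simp]: "(1::complex) \<cdot>\<^sub>m X = X"
  by (rule eq_matI) auto

lemma mult_emat_index:
  assumes "X \<in> carrier_mat d d" "a < d" "b < d" "j < d" "k < d"
  shows "(X * emat d j k) $$ (a,b) = (if b = k then X $$ (a,j) else 0)"
proof -
  have "(X * emat d j k) $$ (a,b) = (\<Sum>t<d. X $$ (a,t) * (if t = j \<and> b = k then 1 else 0))"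
    using assms by simp
  also have "\<dots> = (\<Sum>t<d. if t = j then (if b = k then X $$ (a,t) else 0) else 0)"
    by (intro sum.cong) auto
  also have "\<dots> = (if b = k then X $$ (a,j) else 0)" using assms by simp
  finally show ?thesis .
qed

lemma emat_mult_index:
  assumes "X \<in> carrier_mat d d" "a < d" "b < d" "j < d" "k < d"
  shows "(emat d j k * X) $$ (a,b) = (if a = j then X $$ (k,b) else 0)"
proof -
  have "(emat d j k * X) $$ (a,b) = (\<Sum>t<d. (if a = j \<and> t = k then 1 else 0) * X $$ (t,b))"
    using assms by simp
  also have "\<dots> = (\<Sum>t<d. if t = k then (if a = j then X $$ (t,b) else 0) else 0)"
    by (intro sum.cong) auto
  also have "\<dots> = (if a = j then X $$ (k,b) else 0)" using assms by simp
  finally show ?thesis .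
qed

lemma commute_scalar:
  fixes Z :: "complex mat"
  assumes Z: "Z \<in> carrier_mat d d" and d: "0 < d"
    and comm: "\<And>M. M \<in> carrier_mat d d \<Longrightarrow> Z * M = M * Z"
  shows "Z = Z $$ (0,0) \<cdot>\<^sub>m 1\<^sub>m d"
proof (rule eq_matI)
  fix a b assume "a < dim_row (Z $$ (0,0) \<cdot>\<^sub>m 1\<^sub>m d)" "b < dim_col (Z $$ (0,0) \<cdot>\<^sub>m 1\<^sub>m d)"
  then have ab: "a < d" "b < d" by auto
  have key: "\<And>j k a b. j < d \<Longrightarrow> k < d \<Longrightarrow> a < d \<Longrightarrow> b < d \<Longrightarrow>
     (if b = k then Z $$ (a,j) else 0) = (if a = j then Z $$ (k,b) else 0)"
  proof -
    fix j k a b assume jkab: "j < d" "k < d" "a < d" "b < d"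
    have "Z * emat d j k = emat d j k * Z" by (rule comm) simp
    then have "(Z * emat d j k) $$ (a,b) = (emat d j k * Z) $$ (a,b)" by simp
    then show "(if b = k then Z $$ (a,j) else 0) = (if a = j then Z $$ (k,b) else 0)"
      using mult_emat_index[OF Z jkab(3,4,1,2)] emat_mult_index[OF Z jkab(3,4,1,2)] by simp
  qed
  show "Z $$ (a,b) = (Z $$ (0,0) \<cdot>\<^sub>m 1\<^sub>m d) $$ (a,b)"
  proof (cases "a = b")
    case True
    have "Z $$ (b,b) = Z $$ (0,0)" using key[of b 0 b 0] ab d by simp
    then show ?thesis using True ab by simp
  next
    case False
    have "Z $$ (a,b) = 0" using key[of b b a b] ab False by simp
    then show ?thesis using False ab by simp
  qed
qed (use Z in auto)

lemma injective_plus_spans: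
  assumes "injective_plus N n A" "carr (2*n) N A"
  shows "\<exists>l. spans (2*n) N A l"
proof -
  obtain l where l: "\<forall>M \<in> carrier_mat (2*n) (2*n). \<exists>c :: nat list \<Rightarrow> complex.
        M = mat (2*n) (2*n) (\<lambda>(r,s). \<Sum>w\<in>words N l. c w * wprod (2*n) A w $$ (r,s))"
    using assms(1) unfolding injective_plus_def by blast
  have "mat (2*n) (2*n) (\<lambda>(r,s). \<Sum>w\<in>words N l. c w * wprod (2*n) A w $$ (r,s)) = comb (2*n) N A l c" for c
    by (rule eq_matI) (auto simp: comb_index[OF assms(2)])
  then show ?thesis using l unfolding spans_def by metis
qed

lemma comb_single:
  assumes A: "carr d N A" and i: "i \<in> {1..N}"
  shows "comb d N A 1 (\<lambda>w. if w = [i] then 1 else 0) = A i"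
proof (rule eq_matI)
  have Ai: "A i \<in> carrier_mat d d" using A i by (auto simp: carr_def)
  fix r s assume "r < dim_row (A i)" "s < dim_col (A i)"
  then have rs: "r < d" "s < d" using Ai by auto
  have "[i] \<in> words N 1" using i by (simp add: words_def)
  have "comb d N A 1 (\<lambda>w. if w = [i] then 1 else 0) $$ (r,s) = (\<Sum>w\<in>words N 1. if w = [i] then wprod d A w $$ (r,s) else 0)"
    unfolding comb_index[OF A rs] by (rule sum.cong) auto
  also have "\<dots> = wprod d A [i] $$ (r,s)" using \<open>[i] \<in> words N 1\<close> by simp
  finally have "comb d N A 1 (\<lambda>w. if w = [i] then 1 else 0) $$ (r,s) = wprod d A [i] $$ (r,s)" .
  also have "\<dots> = A i $$ (r,s)" using Ai by simp
  finally show "comb d N A 1 (\<lambda>w. if w = [i] then 1 else 0) $$ (r,s) = A i $$ (r,s)" .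
qed (use A i in \<open>auto simp: carr_def\<close>)

lemma canonical_msum:
  "canonical_form N n A \<Longrightarrow> msum (2*n) (\<lambda>i. A i * adj (A i)) {1..N} = 1\<^sub>m (2*n)"
  by (simp add: canonical_form_def msum_def)

lemma spans_Suc:
  assumes A: "carr d N A" and can: "msum d (\<lambda>i. A i * adj (A i)) {1..N} = 1\<^sub>m d"
    and sp: "spans d N A l"
  shows "spans d N A (Suc l)"
  unfolding spans_def
proof
  fix M :: "complex mat" assume M: "M \<in> carrier_mat d d"
  have Ai: "\<And>i. i \<in> {1..N} \<Longrightarrow> A i \<in> carrier_mat d d" using A by (auto simp: carr_def)
  have "\<forall>i\<in>{1..N}. \<exists>a. adj (A i) * M = comb d N A l a"
    using sp M Ai unfolding spans_def by (meson adj_carrier mult_carrier_mat)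
  then obtain a where a: "\<And>i. i \<in> {1..N} \<Longrightarrow> adj (A i) * M = comb d N A l (a i)"
    by metis
  let ?\<delta> = "\<lambda>i w. if w = [i] then (1::complex) else 0"
  have "M = 1\<^sub>m d * M" using M by simp
  also have "\<dots> = msum d (\<lambda>i. A i * adj (A i) * M) {1..N}"
    using M Ai by (subst can[symmetric], subst msum_mult[of _ d]) (auto intro: mult_carrier_mat[of _ d d _ d])
  also have "\<dots> = msum d (\<lambda>i. 1 \<cdot>\<^sub>m comb d N A (1 + l) (\<lambda>u. ?\<delta> i (take 1 u) * a i (drop 1 u))) {1..N}"
  proof (rule msum_cong)
    fix i assume i: "i \<in> {1..N}"
    have "A i * adj (A i) * M = A i * (adj (A i) * M)"
      using Ai[OF i] M by (simp add: assoc_mult_mat[of _ d d _ d _ d])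
    also have "\<dots> = comb d N A 1 (?\<delta> i) * comb d N A l (a i)"
      using a[OF i] comb_single[OF A i] by simp
    also have "\<dots> = comb d N A (1 + l) (\<lambda>u. ?\<delta> i (take 1 u) * a i (drop 1 u))"
      by (rule comb_mult[OF A])
    finally show "A i * adj (A i) * M = 1 \<cdot>\<^sub>m comb d N A (1 + l) (\<lambda>u. ?\<delta> i (take 1 u) * a i (drop 1 u))"
      by simp
  qed
  also have "\<dots> = comb d N A (1 + l) (\<lambda>w. \<Sum>i\<in>{1..N}. 1 * (?\<delta> i (take 1 w) * a i (drop 1 w)))"
    by (rule comb_lin[OF A]) simp
  finally show "\<exists>c. M = comb d N A (Suc l) c" by auto
qed

lemma spans_mono:
  assumes A: "carr d N A" and can: "msum d (\<lambda>i. A i * adj (A i)) {1..N} = 1\<^sub>m d"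
    and sp: "spans d N A l" and lm: "l \<le> m"
  shows "spans d N A m"
  using lm
proof (induction m)
  case 0 then show ?case using sp by simp
next
  case (Suc m)
  then show ?case using spans_Suc[OF A can] sp by (cases "l = Suc m") auto
qed

lemma mult_carrier_sq[simp,intro]: "A \<in> carrier_mat d d \<Longrightarrow> B \<in> carrier_mat d d \<Longrightarrow> A * B \<in> carrier_mat d d"
  by (rule mult_carrier_mat)

lemma mtrace_comb_sandwich:
  assumes A: "carr d N A" and P: "P \<in> carrier_mat d d" and Y: "Y \<in> carrier_mat d d"
  shows "mtrace (P * (comb d N A m a * Y)) = (\<Sum>w\<in>words N m. a w * mtrace (P * (wprod d A w * Y)))"
proof -
  have W: "\<And>w. w \<in> words N m \<Longrightarrow> wprod d A w \<in> carrier_mat d d" using carr_wprod[OF A] by auto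
  have "P * (comb d N A m a * Y) = msum d (\<lambda>w. P * (a w \<cdot>\<^sub>m (wprod d A w * Y))) (words N m)"
    using comb_mult_right[OF A Y] W Y P by (simp, subst mult_msum[of _ d]) (auto intro!: smult_carrier_mat mult_carrier_mat[of _ d d _ d])
  also have "\<dots> = msum d (\<lambda>w. a w \<cdot>\<^sub>m (P * (wprod d A w * Y))) (words N m)"
    using W Y P by (intro msum_cong) (auto intro!: mult_smult_distrib[of _ d d _ d])
  finally show ?thesis using W Y P by (simp add: mtrace_msum) (auto intro!: sum.cong mtrace_smult[of _ d])
qed

locale fund =
  fixes d N :: nat and A B :: "nat \<Rightarrow> complex mat" and P Q Qi :: "complex mat"
    and l :: nat and \<alpha> :: "nat \<Rightarrow> real"
  assumes d: "0 < d"
    and A: "carr d N A" and B: "carr d N B"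
    and canA: "msum d (\<lambda>i. A i * adj (A i)) {1..N} = 1\<^sub>m d"
    and canB: "msum d (\<lambda>i. B i * adj (B i)) {1..N} = 1\<^sub>m d"
    and spA: "spans d N A l" and spB: "spans d N B l"
    and P: "P \<in> carrier_mat d d" and Q: "Q \<in> carrier_mat d d" and Qi: "Qi \<in> carrier_mat d d"
    and QiQ: "Qi * Q = 1\<^sub>m d" and P0: "P \<noteq> 0\<^sub>m d d"
    and tr: "\<And>L w. w \<in> words N L \<Longrightarrow> mtrace (P * wprod d A w) = exp (\<i> * of_real (\<alpha> L)) * mtrace (Q * wprod d B w)"
begin

lemma spA': "l \<le> m \<Longrightarrow> spans d N A m" using spans_mono[OF A canA spA] .
lemma spB': "l \<le> m \<Longrightarrow> spans d N B m" using spans_mono[OF B canB spB] .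

lemma WA: "w \<in> words N m \<Longrightarrow> wprod d A w \<in> carrier_mat d d" using carr_wprod[OF A] by auto
lemma WB: "w \<in> words N m \<Longrightarrow> wprod d B w \<in> carrier_mat d d" using carr_wprod[OF B] by auto

lemma WD:
  assumes a0: "comb d N A m a = 0\<^sub>m d d"
  shows "comb d N B m a = 0\<^sub>m d d"
proof -
  define X where "X = comb d N B m a"
  have X: "X \<in> carrier_mat d d" by (simp add: X_def)
  have QXv: "mtrace (Q * (X * wprod d B v)) = 0" if v: "v \<in> words N l" for v
  proof -
    have Av: "wprod d A v \<in> carrier_mat d d" and Bv: "wprod d B v \<in> carrier_mat d d" using WA[OF v] WB[OF v] .
    have "0 = mtrace (P * (comb d N A m a * wprod d A v))"
      using a0 P Av by simp
    also have "\<dots> = (\<Sum>w\<in>words N m. a w * mtrace (P * (wprod d A w * wprod d A v)))"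
      by (rule mtrace_comb_sandwich[OF A P Av])
    also have "\<dots> = (\<Sum>w\<in>words N m. a w * (exp (\<i> * of_real (\<alpha> (m+l))) * mtrace (Q * (wprod d B w * wprod d B v))))"
    proof (rule sum.cong[OF refl])
      fix w assume w: "w \<in> words N m"
      have wv: "w @ v \<in> words N (m+l)" using w v by (auto simp: words_def)
      have "wprod d A (w @ v) = wprod d A w * wprod d A v"
        using w v A by (intro wprod_append) (auto simp: carr_def words_def)
      moreover have "wprod d B (w @ v) = wprod d B w * wprod d B v"
        using w v B by (intro wprod_append) (auto simp: carr_def words_def)
      ultimately show "a w * mtrace (P * (wprod d A w * wprod d A v)) = a w * (exp (\<i> * of_real (\<alpha> (m+l))) * mtrace (Q * (wprod d B w * wprod d B v)))"
        using tr[OF wv] by simp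
    qed
    also have "\<dots> = exp (\<i> * of_real (\<alpha> (m+l))) * (\<Sum>w\<in>words N m. a w * mtrace (Q * (wprod d B w * wprod d B v)))"
      by (simp add: sum_distrib_left algebra_simps)
    also have "\<dots> = exp (\<i> * of_real (\<alpha> (m+l))) * mtrace (Q * (X * wprod d B v))"
      unfolding X_def by (simp add: mtrace_comb_sandwich[OF B Q Bv])
    finally show ?thesis by simp
  qed
  have "Q * X = 0\<^sub>m d d"
  proof (rule trace_nondeg)
    show "Q * X \<in> carrier_mat d d" using Q X by simp
    fix M :: "complex mat" assume M: "M \<in> carrier_mat d d"
    then obtain c where c: "M = comb d N B l c" using spB unfolding spans_def by blast
    have "mtrace (Q * X * M) = (\<Sum>v\<in>words N l. c v * mtrace (Q * X * wprod d B v))"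
      unfolding c by (rule mtrace_comb_left[OF B]) (use Q X in simp)
    also have "\<dots> = 0"
      using QXv WB Q X by (auto intro!: sum.neutral simp: assoc_mult_mat[of _ d d _ d _ d])
    finally show "mtrace (Q * X * M) = 0" .
  qed
  then have "Qi * (Q * X) = 0\<^sub>m d d" using Qi by simp
  then show ?thesis using QiQ Q Qi X unfolding X_def[symmetric]
    by (metis assoc_mult_mat left_mult_one_mat)
qed

lemma WD_eq:
  assumes "comb d N A m a = comb d N A m b"
  shows "comb d N B m a = comb d N B m b"
  using WD[OF comb_eq_sub0[OF A assms]] comb_sub0_eq[OF B] by blast

definition psi :: "nat \<Rightarrow> complex mat \<Rightarrow> complex mat" where
  "psi m M = comb d N B m (SOME a. M = comb d N A m a)"

lemma psi_eq: "M = comb d N A m a \<Longrightarrow> psi m M = comb d N B m a"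
  unfolding psi_def by (rule WD_eq, rule someI2[of _ a]) auto

lemma psi_carrier[simp]: "psi m M \<in> carrier_mat d d"
  by (simp add: psi_def)

lemma exA: "l \<le> m \<Longrightarrow> M \<in> carrier_mat d d \<Longrightarrow> \<exists>a. M = comb d N A m a"
  using spA' unfolding spans_def by blast
lemma exB: "l \<le> m \<Longrightarrow> M \<in> carrier_mat d d \<Longrightarrow> \<exists>a. M = comb d N B m a"
  using spB' unfolding spans_def by blast

lemma psi_mult:
  assumes "X = comb d N A m a" "Y = comb d N A k b"
  shows "psi (m+k) (X * Y) = psi m X * psi k Y"
  using assms psi_eq comb_mult[OF A] comb_mult[OF B] by metis

lemma psi_mult':
  assumes "l \<le> m" "l \<le> k" "X \<in> carrier_mat d d" "Y \<in> carrier_mat d d"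
  shows "psi (m+k) (X * Y) = psi m X * psi k Y"
  using exA[OF assms(1,3)] exA[OF assms(2,4)] psi_mult by blast

lemma psi_single: "i \<in> {1..N} \<Longrightarrow> psi 1 (A i) = B i"
  using psi_eq[OF comb_single[OF A, symmetric]] comb_single[OF B] by metis

lemma psi_mult_gen:
  assumes "l \<le> k" "i \<in> {1..N}" "Y \<in> carrier_mat d d"
  shows "psi (1+k) (A i * Y) = B i * psi k Y"
proof -
  obtain b where "Y = comb d N A k b" using exA[OF assms(1,3)] by blast
  then show ?thesis using psi_mult[OF comb_single[OF A assms(2), symmetric]] psi_single[OF assms(2)]
    by metis
qed

lemma psi_lin:
  assumes "l \<le> m" "finite J" "\<forall>j\<in>J. M j \<in> carrier_mat d d"
  shows "psi m (msum d (\<lambda>j. s j \<cdot>\<^sub>m M j) J) = msum d (\<lambda>j. s j \<cdot>\<^sub>m psi m (M j)) J"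
proof -
  have "\<forall>j\<in>J. \<exists>a. M j = comb d N A m a" using exA[OF assms(1)] assms(3) by blast
  then obtain a where a: "\<And>j. j \<in> J \<Longrightarrow> M j = comb d N A m (a j)" by metis
  have "msum d (\<lambda>j. s j \<cdot>\<^sub>m M j) J = msum d (\<lambda>j. s j \<cdot>\<^sub>m comb d N A m (a j)) J"
    using a by (intro msum_cong) auto
  also have "\<dots> = comb d N A m (\<lambda>w. \<Sum>j\<in>J. s j * a j w)" by (rule comb_lin[OF A assms(2)])
  finally have "psi m (msum d (\<lambda>j. s j \<cdot>\<^sub>m M j) J) = comb d N B m (\<lambda>w. \<Sum>j\<in>J. s j * a j w)"
    by (rule psi_eq)
  also have "\<dots> = msum d (\<lambda>j. s j \<cdot>\<^sub>m comb d N B m (a j)) J" by (rule comb_lin[OF B assms(2), symmetric])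
  also have "\<dots> = msum d (\<lambda>j. s j \<cdot>\<^sub>m psi m (M j)) J"
    using a psi_eq by (intro msum_cong) auto
  finally show ?thesis .
qed

lemma psi_surj:
  assumes "l \<le> m" "Y \<in> carrier_mat d d"
  shows "\<exists>X\<in>carrier_mat d d. psi m X = Y"
proof -
  obtain b where "Y = comb d N B m b" using exB[OF assms] by blast
  then show ?thesis using psi_eq[of "comb d N A m b" m b] by auto
qed

end

lemma mult_scalar_right[simp]: "dim_col X = d \<Longrightarrow> X * (s \<cdot>\<^sub>m 1\<^sub>m d) = s \<cdot>\<^sub>m (X :: complex mat)"
  by (rule eq_matI) (auto simp: if_distrib cong: if_cong)
lemma mult_scalar_left[simp]: "dim_row X = d \<Longrightarrow> (s \<cdot>\<^sub>m 1\<^sub>m d) * X = s \<cdot>\<^sub>m (X :: complex mat)"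
  by (rule eq_matI) (auto simp: if_distrib cong: if_cong)

lemma smult_smult_mat': "(a::complex) \<cdot>\<^sub>m (b \<cdot>\<^sub>m X) = (a * b) \<cdot>\<^sub>m X"
  by (rule eq_matI) auto
lemma zero_smult_mat'[simp]: "(0::complex) \<cdot>\<^sub>m X = 0\<^sub>m (dim_row X) (dim_col X)"
  by (rule eq_matI) auto

context fund begin

definition "P0 = psi l (1\<^sub>m d)"
definition "p = P0 $$ (0,0)"
definition "Q0 = psi (Suc l) (1\<^sub>m d)"
definition "q = Q0 $$ (0,0)"
definition "cc = q / p"

lemma psi_ll:
  assumes X: "X \<in> carrier_mat d d"
  shows "psi (l+l) X = psi l X * P0" "psi (l+l) X = P0 * psi l X"
proof -
  show "psi (l+l) X = psi l X * P0"
    using psi_mult'[of l l X "1\<^sub>m d"] X unfolding P0_def by simp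
  show "psi (l+l) X = P0 * psi l X"
    using psi_mult'[of l l "1\<^sub>m d" X] X unfolding P0_def by simp
qed

lemma psi_dims[simp]: "dim_row (psi m X) = d" "dim_col (psi m X) = d"
  using psi_carrier[of m X] by (auto simp del: psi_carrier)

lemma P0_carrier[simp]: "P0 \<in> carrier_mat d d" by (simp add: P0_def)
lemma Q0_carrier[simp]: "Q0 \<in> carrier_mat d d" by (simp add: Q0_def)

lemma P0_scalar: "P0 = p \<cdot>\<^sub>m 1\<^sub>m d"
  unfolding p_def
proof (rule commute_scalar[OF P0_carrier d])
  fix M :: "complex mat" assume M: "M \<in> carrier_mat d d"
  obtain X where X: "X \<in> carrier_mat d d" "psi l X = M" using psi_surj[OF le_refl M] by blast
  show "P0 * M = M * P0" using psi_ll[OF X(1)] X(2) by simp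
qed

lemma p_nz: "p \<noteq> 0"
proof
  assume p0: "p = 0"
  obtain X where X: "X \<in> carrier_mat d d" "psi (l+l) X = 1\<^sub>m d" using psi_surj[of "l+l" "1\<^sub>m d"] by auto
  have "psi (l+l) X = 0\<^sub>m d d" using psi_ll(1)[OF X(1)] P0_scalar p0 by simp
  then have "(1\<^sub>m d :: complex mat) $$ (0,0) = (0\<^sub>m d d :: complex mat) $$ (0,0)" using X(2) by simp
  then show False using d by simp
qed

lemma psi_Suc_l:
  assumes X: "X \<in> carrier_mat d d"
  shows "psi l X * Q0 = p \<cdot>\<^sub>m psi (Suc l) X" "Q0 * psi l X = p \<cdot>\<^sub>m psi (Suc l) X"
proof -
  have e: "psi (l + Suc l) = psi (Suc l + l)" by (simp add: add.commute)
  have a: "psi (l + Suc l) (X * 1\<^sub>m d) = psi l X * Q0"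
    using psi_mult'[of l "Suc l" X "1\<^sub>m d"] X unfolding Q0_def by simp
  have b: "psi (Suc l + l) (X * 1\<^sub>m d) = psi (Suc l) X * P0"
    using psi_mult'[of "Suc l" l X "1\<^sub>m d"] X unfolding P0_def by simp
  have c: "psi (l + Suc l) (1\<^sub>m d * X) = P0 * psi (Suc l) X"
    using psi_mult'[of l "Suc l" "1\<^sub>m d" X] X unfolding P0_def by simp
  have dd: "psi (Suc l + l) (1\<^sub>m d * X) = Q0 * psi l X"
    using psi_mult'[of "Suc l" l "1\<^sub>m d" X] X unfolding Q0_def by simp
  have Ps: "psi (Suc l) X * P0 = p \<cdot>\<^sub>m psi (Suc l) X" "P0 * psi (Suc l) X = p \<cdot>\<^sub>m psi (Suc l) X"
    by (subst P0_scalar, simp add: psi_carrier)+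
  show "psi l X * Q0 = p \<cdot>\<^sub>m psi (Suc l) X" using a b e Ps by simp
  show "Q0 * psi l X = p \<cdot>\<^sub>m psi (Suc l) X" using c dd e Ps by simp
qed

lemma Q0_scalar: "Q0 = q \<cdot>\<^sub>m 1\<^sub>m d"
  unfolding q_def
proof (rule commute_scalar[OF Q0_carrier d])
  fix M :: "complex mat" assume M: "M \<in> carrier_mat d d"
  obtain X where X: "X \<in> carrier_mat d d" "psi l X = M" using psi_surj[OF le_refl M] by blast
  show "Q0 * M = M * Q0" using psi_Suc_l[OF X(1)] X(2) by simp
qed

lemma psi_Suc_c:
  assumes X: "X \<in> carrier_mat d d"
  shows "psi (Suc l) X = cc \<cdot>\<^sub>m psi l X"
proof -
  have "p \<cdot>\<^sub>m psi (Suc l) X = q \<cdot>\<^sub>m psi l X"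
    using psi_Suc_l(1)[OF X] Q0_scalar by simp
  then have "(1/p) \<cdot>\<^sub>m (p \<cdot>\<^sub>m psi (Suc l) X) = (1/p) \<cdot>\<^sub>m (q \<cdot>\<^sub>m psi l X)" by simp
  then show ?thesis using p_nz by (simp add: smult_smult_mat' cc_def)
qed

lemma B_psi:
  assumes i: "i \<in> {1..N}" and Y: "Y \<in> carrier_mat d d"
  shows "B i * psi l Y = cc \<cdot>\<^sub>m psi l (A i * Y)"
proof -
  have Ai: "A i \<in> carrier_mat d d" using A i by (auto simp: carr_def)
  have "B i * psi l Y = psi (1 + l) (A i * Y)" using psi_mult_gen[OF le_refl i Y] by simp
  also have "\<dots> = cc \<cdot>\<^sub>m psi l (A i * Y)" using psi_Suc_c[of "A i * Y"] Ai Y by simp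
  finally show ?thesis .
qed

lemma psi_mult_p:
  assumes X: "X \<in> carrier_mat d d" and Y: "Y \<in> carrier_mat d d"
  shows "psi l X * psi l Y = p \<cdot>\<^sub>m psi l (X * Y)"
  using psi_mult'[OF le_refl le_refl X Y] psi_ll(1)[of "X*Y"] X Y P0_scalar by simp

end

lemma msum_zero: "(\<And>i. i \<in> I \<Longrightarrow> F i = 0\<^sub>m d d) \<Longrightarrow> msum d F I = 0\<^sub>m d d"
  by (rule eq_matI) auto

context fund begin

definition Tm :: "nat \<Rightarrow> complex mat" where
  "Tm a = mat d d (\<lambda>(r,k). psi l (emat d k 0) $$ (r,a))"

lemma Tm_carrier[simp]: "Tm a \<in> carrier_mat d d" by (simp add: Tm_def)
lemma Tm_dims[simp]: "dim_row (Tm a) = d" "dim_col (Tm a) = d" by (simp_all add: Tm_def)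

lemma Ai_carrier: "i \<in> {1..N} \<Longrightarrow> A i \<in> carrier_mat d d" using A by (auto simp: carr_def)
lemma Bi_carrier: "i \<in> {1..N} \<Longrightarrow> B i \<in> carrier_mat d d" using B by (auto simp: carr_def)

lemma AE:
  assumes i: "i \<in> {1..N}" and k: "k < d"
  shows "A i * emat d k 0 = msum d (\<lambda>j. (A i $$ (j,k)) \<cdot>\<^sub>m emat d j 0) {..<d}"
proof (rule eq_matI)
  fix x y assume "x < dim_row (msum d (\<lambda>j. (A i $$ (j,k)) \<cdot>\<^sub>m emat d j 0) {..<d})"
    "y < dim_col (msum d (\<lambda>j. (A i $$ (j,k)) \<cdot>\<^sub>m emat d j 0) {..<d})"
  then have xy: "x < d" "y < d" by auto
  have "(A i * emat d k 0) $$ (x,y) = (if y = 0 then A i $$ (x,k) else 0)"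
    using mult_emat_index[OF Ai_carrier[OF i] xy k d] by simp
  moreover have "msum d (\<lambda>j. (A i $$ (j,k)) \<cdot>\<^sub>m emat d j 0) {..<d} $$ (x,y) = (\<Sum>j<d. ((A i $$ (j,k)) \<cdot>\<^sub>m emat d j 0) $$ (x,y))"
    by (rule msum_index[OF xy])
  moreover have "\<dots> = (\<Sum>j<d. if j = x then (if y = 0 then A i $$ (j,k) else 0) else 0)"
    by (rule sum.cong) (use xy in auto)
  moreover have "\<dots> = (if y = 0 then A i $$ (x,k) else 0)" using xy by simp
  ultimately show "(A i * emat d k 0) $$ (x,y) = msum d (\<lambda>j. (A i $$ (j,k)) \<cdot>\<^sub>m emat d j 0) {..<d} $$ (x,y)"
    by simp
qed (use Ai_carrier[OF i] in auto)

lemma BT: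
  assumes i: "i \<in> {1..N}" and a: "a < d"
  shows "B i * Tm a = cc \<cdot>\<^sub>m (Tm a * A i)"
proof (rule eq_matI)
  fix r k assume "r < dim_row (cc \<cdot>\<^sub>m (Tm a * A i))" "k < dim_col (cc \<cdot>\<^sub>m (Tm a * A i))"
  then have rk: "r < d" "k < d" using Ai_carrier[OF i] by auto
  have Bi: "B i \<in> carrier_mat d d" and Ai: "A i \<in> carrier_mat d d" using Bi_carrier[OF i] Ai_carrier[OF i] .
  have "(B i * Tm a) $$ (r,k) = (B i * psi l (emat d k 0)) $$ (r,a)"
    using Bi rk a by (simp add: Tm_def scalar_prod_def lessThan_atLeast0)
  also have "\<dots> = cc * psi l (A i * emat d k 0) $$ (r,a)"
    using B_psi[OF i, of "emat d k 0"] rk a by simp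
  also have "psi l (A i * emat d k 0) = msum d (\<lambda>j. (A i $$ (j,k)) \<cdot>\<^sub>m psi l (emat d j 0)) {..<d}"
    unfolding AE[OF i rk(2)] by (rule psi_lin) auto
  also have "cc * msum d (\<lambda>j. (A i $$ (j,k)) \<cdot>\<^sub>m psi l (emat d j 0)) {..<d} $$ (r,a)
      = cc * (\<Sum>j<d. psi l (emat d j 0) $$ (r,a) * A i $$ (j,k))"
    using rk a by (simp add: mult.commute)
  also have "\<dots> = (cc \<cdot>\<^sub>m (Tm a * A i)) $$ (r,k)"
    using Ai rk a by (simp add: Tm_def scalar_prod_def lessThan_atLeast0)
  finally show "(B i * Tm a) $$ (r,k) = (cc \<cdot>\<^sub>m (Tm a * A i)) $$ (r,k)" .
qed (use Bi_carrier[OF i] Ai_carrier[OF i] in auto)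

lemma emat_mult_emat: assumes "i < d" "j < d" "k < d" shows "emat d i j * emat d j k = emat d i k"
proof (rule eq_matI)
  fix a b assume "a < dim_row (emat d i k)" "b < dim_col (emat d i k)"
  then have ab: "a < d" "b < d" by auto
  show "(emat d i j * emat d j k) $$ (a,b) = emat d i k $$ (a,b)"
    using mult_emat_index[OF emat_carrier ab assms(2,3), of i j] ab assms by simp
qed auto

lemma one_emat: "1\<^sub>m d = msum d (\<lambda>k. 1 \<cdot>\<^sub>m (emat d k 0 * emat d 0 k)) {..<d}"
proof (rule eq_matI)
  fix x y assume "x < dim_row (msum d (\<lambda>k. 1 \<cdot>\<^sub>m (emat d k 0 * emat d 0 k)) {..<d})"
      "y < dim_col (msum d (\<lambda>k. 1 \<cdot>\<^sub>m (emat d k 0 * emat d 0 k)) {..<d})"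
  then have xy: "x < d" "y < d" by auto
  have "msum d (\<lambda>k. 1 \<cdot>\<^sub>m (emat d k 0 * emat d 0 k)) {..<d} $$ (x,y) = (\<Sum>k<d. (1 \<cdot>\<^sub>m (emat d k 0 * emat d 0 k)) $$ (x,y))"
    by (rule msum_index[OF xy])
  also have "\<dots> = (\<Sum>k<d. if k = x then (if x = y then 1 else 0) else 0)"
    by (rule sum.cong) (use xy d in \<open>auto simp: emat_mult_emat\<close>)
  also have "\<dots> = (if x = y then 1 else 0)" using xy by simp
  finally show "1\<^sub>m d $$ (x,y) = msum d (\<lambda>k. 1 \<cdot>\<^sub>m (emat d k 0 * emat d 0 k)) {..<d} $$ (x,y)"
    using xy by simp
qed auto

lemma T_exists: "\<exists>a<d. Tm a \<noteq> 0\<^sub>m d d"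
proof (rule ccontr)
  assume "\<not> ?thesis"
  then have T0: "\<And>a. a < d \<Longrightarrow> Tm a = 0\<^sub>m d d" by auto
  have psi0: "psi l (emat d k 0) = 0\<^sub>m d d" if k: "k < d" for k
  proof (rule eq_matI)
    fix r a assume "r < dim_row (0\<^sub>m d d :: complex mat)" "a < dim_col (0\<^sub>m d d :: complex mat)"
    then have ra: "r < d" "a < d" by auto
    have "Tm a $$ (r,k) = 0" using T0[OF ra(2)] ra k by simp
    then show "psi l (emat d k 0) $$ (r,a) = 0\<^sub>m d d $$ (r,a)" using ra k by (simp add: Tm_def)
  qed auto
  have "psi (l+l) (1\<^sub>m d) = msum d (\<lambda>k. 1 \<cdot>\<^sub>m psi (l+l) (emat d k 0 * emat d 0 k)) {..<d}"
    by (subst one_emat, rule psi_lin) auto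
  also have "\<dots> = 0\<^sub>m d d"
    by (rule msum_zero) (simp add: psi_mult'[of l l] psi0)
  finally have "psi (l+l) (1\<^sub>m d) = 0\<^sub>m d d" .
  moreover have "psi (l+l) (1\<^sub>m d) = (p * p) \<cdot>\<^sub>m 1\<^sub>m d"
    using psi_ll(1)[of "1\<^sub>m d"] P0_scalar unfolding P0_def[symmetric] by (simp add: smult_smult_mat')
  ultimately have "((p * p) \<cdot>\<^sub>m 1\<^sub>m d :: complex mat) $$ (0,0) = (0\<^sub>m d d :: complex mat) $$ (0,0)" by simp
  then show False using d p_nz by simp
qed

definition "a0 = (SOME a. a < d \<and> Tm a \<noteq> 0\<^sub>m d d)"
definition "T = Tm a0"

lemma a0: "a0 < d" "T \<noteq> 0\<^sub>m d d"
  using someI_ex[OF T_exists] unfolding a0_def[symmetric] T_def by auto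

lemma T_carrier[simp]: "T \<in> carrier_mat d d" by (simp add: T_def)
lemma T_dims[simp]: "dim_row T = d" "dim_col T = d" by (simp_all add: T_def)

lemma BiT: "i \<in> {1..N} \<Longrightarrow> B i * T = cc \<cdot>\<^sub>m (T * A i)"
  unfolding T_def using BT a0(1) by blast

lemma BwT: "set w \<subseteq> {1..N} \<Longrightarrow> wprod d B w * T = (cc ^ length w) \<cdot>\<^sub>m (T * wprod d A w)"
proof (induction w)
  case Nil then show ?case by simp
next
  case (Cons i w)
  have i: "i \<in> {1..N}" and w: "set w \<subseteq> {1..N}" using Cons.prems by auto
  have Ai: "A i \<in> carrier_mat d d" and Bi: "B i \<in> carrier_mat d d" using Ai_carrier[OF i] Bi_carrier[OF i] .
  have Aw: "wprod d A w \<in> carrier_mat d d" and Bw: "wprod d B w \<in> carrier_mat d d"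
    using carr_wprod'[OF A w] carr_wprod'[OF B w] .
  have "wprod d B (i # w) * T = B i * (wprod d B w * T)" using Bi Bw by (simp add: assoc_mult_mat[of _ d d _ d _ d])
  also have "\<dots> = B i * ((cc ^ length w) \<cdot>\<^sub>m (T * wprod d A w))" using Cons.IH[OF w] by simp
  also have "\<dots> = (cc ^ length w) \<cdot>\<^sub>m ((B i * T) * wprod d A w)"
    using Bi Aw by (simp add: mult_smult_distrib[of _ d d _ d] assoc_mult_mat[of _ d d _ d _ d])
  also have "\<dots> = (cc ^ length w) \<cdot>\<^sub>m ((cc \<cdot>\<^sub>m (T * A i)) * wprod d A w)" using BiT[OF i] by simp
  also have "\<dots> = (cc ^ length (i # w)) \<cdot>\<^sub>m (T * wprod d A (i # w))"
    using Ai Aw by (simp add: mult_smult_assoc_mat[of _ d d _ d] smult_smult_mat' mult.commute assoc_mult_mat[of _ d d _ d _ d])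
  finally show ?case .
qed

lemma T_det: "det T \<noteq> 0"
proof
  assume "det T = 0"
  then have "det (transpose_mat T) = 0" using det_transpose[OF T_carrier] by simp
  then obtain v where v: "v \<in> carrier_vec d" "v \<noteq> 0\<^sub>v d" "transpose_mat T *\<^sub>v v = 0\<^sub>v d"
    using det_0_iff_vec_prod_zero[of "transpose_mat T" d] by auto
  obtain j where j: "j < d" "v $ j \<noteq> 0" using v(1,2) by (metis carrier_vecD eq_vecI index_zero_vec(1,2))
  define R where "R = mat d d (\<lambda>(i,j). if i = 0 then v $ j else (0::complex))"
  have R: "R \<in> carrier_mat d d" by (simp add: R_def)
  have R0: "R \<noteq> 0\<^sub>m d d"
  proof
    assume "R = 0\<^sub>m d d"
    then have "R $$ (0,j) = 0" using j d by simp
    then show False using j d by (simp add: R_def)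
  qed
  have RT: "R * T = 0\<^sub>m d d"
  proof (rule eq_matI)
    fix x k assume "x < dim_row (0\<^sub>m d d :: complex mat)" "k < dim_col (0\<^sub>m d d :: complex mat)"
    then have xk: "x < d" "k < d" by auto
    have "(transpose_mat T *\<^sub>v v) $ k = (\<Sum>t<d. T $$ (t,k) * v $ t)"
      using xk v(1) by (simp add: scalar_prod_def lessThan_atLeast0)
    then have "(\<Sum>t<d. T $$ (t,k) * v $ t) = 0" using v(3) xk by simp
    then show "(R * T) $$ (x,k) = 0\<^sub>m d d $$ (x,k)"
      using xk by (cases "x = 0") (simp_all add: R_def mult.commute scalar_prod_def lessThan_atLeast0)
  qed (use R in auto)
  have "T = 0\<^sub>m d d"
  proof (rule sandwich_zero[OF R T_carrier R0])
    fix M :: "complex mat" assume M: "M \<in> carrier_mat d d"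
    obtain b where b: "M = comb d N B l b" using exB[OF le_refl M] by blast
    have "R * M * T = R * (comb d N B l b * T)" using R b by (simp add: assoc_mult_mat[of _ d d _ d _ d])
    also have "\<dots> = msum d (\<lambda>w. R * (b w \<cdot>\<^sub>m (wprod d B w * T))) (words N l)"
      using comb_mult_right[OF B T_carrier] R WB by (simp, subst mult_msum[of _ d]) (auto intro!: smult_carrier_mat)
    also have "\<dots> = 0\<^sub>m d d"
    proof (rule msum_zero)
      fix w assume w: "w \<in> words N l"
      have ws: "set w \<subseteq> {1..N}" using w by (simp add: words_def)
      have Aw: "wprod d A w \<in> carrier_mat d d" using WA[OF w] .
      have "R * (b w \<cdot>\<^sub>m (wprod d B w * T)) = R * (b w \<cdot>\<^sub>m ((cc ^ length w) \<cdot>\<^sub>m (T * wprod d A w)))"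
        using BwT[OF ws] by simp
      also have "\<dots> = (b w * cc ^ length w) \<cdot>\<^sub>m ((R * T) * wprod d A w)"
        using R Aw by (simp add: smult_smult_mat' mult_smult_distrib[of _ d d _ d] assoc_mult_mat[of _ d d _ d _ d])
      also have "\<dots> = 0\<^sub>m d d" using RT Aw by simp
      finally show "R * (b w \<cdot>\<^sub>m (wprod d B w * T)) = 0\<^sub>m d d" .
    qed
    finally show "R * M * T = 0\<^sub>m d d" .
  qed
  then show False using a0(2) by simp
qed

lemma T_inv: "\<exists>Ti. Ti \<in> carrier_mat d d \<and> T * Ti = 1\<^sub>m d \<and> Ti * T = 1\<^sub>m d"
  using det_non_zero_imp_unit[OF T_carrier T_det, unfolded Units_def ring_mat_def] by auto

end

context fund begin

definition "Ti = (SOME Ti. Ti \<in> carrier_mat d d \<and> T * Ti = 1\<^sub>m d \<and> Ti * T = 1\<^sub>m d)"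

lemma Ti: "Ti \<in> carrier_mat d d" "T * Ti = 1\<^sub>m d" "Ti * T = 1\<^sub>m d"
  using someI_ex[OF T_inv] unfolding Ti_def[symmetric] by auto

definition "kap L = exp (\<i> * of_real (\<alpha> L)) * cc ^ L"

lemma P_kap:
  assumes L: "l \<le> L"
  shows "P = kap L \<cdot>\<^sub>m (Ti * Q * T)"
proof -
  let ?R = "Ti * Q * T"
  have R: "?R \<in> carrier_mat d d" using Ti Q by simp
  have tw: "mtrace ((P - kap L \<cdot>\<^sub>m ?R) * wprod d A w) = 0" if w: "w \<in> words N L" for w
  proof -
    have ws: "set w \<subseteq> {1..N}" and len: "length w = L" using w by (auto simp: words_def)
    have Aw: "wprod d A w \<in> carrier_mat d d" and Bw: "wprod d B w \<in> carrier_mat d d" using WA[OF w] WB[OF w] .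
    have "mtrace (Q * wprod d B w) = mtrace (Q * wprod d B w * (T * Ti))" using Ti Q Bw by simp
    also have "\<dots> = mtrace (Q * (wprod d B w * T) * Ti)"
      using Ti Q Bw by (simp add: assoc_mult_mat[of _ d d _ d _ d])
    also have "\<dots> = mtrace ((cc ^ L) \<cdot>\<^sub>m (Q * T * wprod d A w * Ti))"
      using BwT[OF ws] len Ti Q Aw
      by (simp add: mult_smult_distrib[of _ d d _ d] mult_smult_assoc_mat[of _ d d _ d] assoc_mult_mat[of _ d d _ d _ d])
    also have "\<dots> = cc ^ L * mtrace (Q * T * wprod d A w * Ti)"
      using Ti Q Aw by (simp add: mtrace_smult[of _ d])
    also have "\<dots> = cc ^ L * mtrace (Ti * (Q * T * wprod d A w))"
      using Ti Q Aw by (subst mtrace_mult_comm[of _ d d]) auto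
    also have "\<dots> = cc ^ L * mtrace (?R * wprod d A w)"
      using Ti Q Aw by (simp add: assoc_mult_mat[of _ d d _ d _ d])
    finally have e: "mtrace (Q * wprod d B w) = cc ^ L * mtrace (?R * wprod d A w)" .
    have "mtrace ((P - kap L \<cdot>\<^sub>m ?R) * wprod d A w) = mtrace (P * wprod d A w) - kap L * mtrace (?R * wprod d A w)"
      using P R Aw by (simp add: minus_mult_distrib_mat[of _ d d] mtrace_minus[of _ d] mult_smult_assoc_mat[of _ d d _ d] mtrace_smult[of _ d])
    also have "\<dots> = 0" using tr[OF w] e len by (simp add: kap_def)
    finally show ?thesis .
  qed
  have "P - kap L \<cdot>\<^sub>m ?R = 0\<^sub>m d d"
  proof (rule trace_nondeg)
    show "P - kap L \<cdot>\<^sub>m ?R \<in> carrier_mat d d" using P R by (intro minus_carrier_mat) auto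
    fix M :: "complex mat" assume M: "M \<in> carrier_mat d d"
    obtain a where a: "M = comb d N A L a" using exA[OF L M] by blast
    show "mtrace ((P - kap L \<cdot>\<^sub>m ?R) * M) = 0"
      unfolding a using P R tw by (subst mtrace_comb_left[OF A]) (auto intro!: minus_carrier_mat)
  qed
  then have z: "\<And>x y. x < d \<Longrightarrow> y < d \<Longrightarrow> (P - kap L \<cdot>\<^sub>m ?R) $$ (x,y) = 0" by simp
  show ?thesis
  proof (rule eq_matI)
    fix x y assume "x < dim_row (kap L \<cdot>\<^sub>m ?R)" "y < dim_col (kap L \<cdot>\<^sub>m ?R)"
    then have xy: "x < d" "y < d" using R by auto
    have "(P - kap L \<cdot>\<^sub>m ?R) $$ (x,y) = P $$ (x,y) - (kap L \<cdot>\<^sub>m ?R) $$ (x,y)"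
      using xy carrier_matD[OF R] by (intro index_minus_mat(1)) auto
    then show "P $$ (x,y) = (kap L \<cdot>\<^sub>m ?R) $$ (x,y)" using z[OF xy] by simp
  qed (use P R in auto)
qed

end

lemma cmod_exp_i[simp]: "cmod (exp (\<i> * of_real t)) = 1"
  by (metis cis_conv_exp norm_cis)

context fund begin

lemma cc_norm: "cmod cc = 1"
proof -
  let ?R = "Ti * Q * T"
  have R: "?R \<in> carrier_mat d d" using Ti Q by simp
  obtain x y where xy: "x < d" "y < d" "P $$ (x,y) \<noteq> 0"
    using P0 P by (metis carrier_matD(1,2) eq_matI index_zero_mat(1,2,3))
  have e1: "P $$ (x,y) = kap l * ?R $$ (x,y)" using P_kap[of l] xy R by (metis carrier_matD(1,2) index_smult_mat(1) le_refl)
  have e2: "P $$ (x,y) = kap (Suc l) * ?R $$ (x,y)" using P_kap[of "Suc l"] xy R by (metis carrier_matD(1,2) index_smult_mat(1) le_SucI le_refl)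
  have Rnz: "?R $$ (x,y) \<noteq> 0" using e1 xy(3) by auto
  have k: "kap l = kap (Suc l)" using e1 e2 Rnz by simp
  have knz: "kap l \<noteq> 0" using e1 xy(3) by auto
  have "cmod (kap l) = cmod cc ^ l" by (simp add: kap_def norm_mult norm_power)
  moreover have "cmod (kap (Suc l)) = cmod cc ^ l * cmod cc" by (simp add: kap_def norm_mult norm_power)
  ultimately have "cmod cc ^ l = cmod cc ^ l * cmod cc" "cmod cc ^ l \<noteq> 0" using k knz by auto
  then show ?thesis by (metis mult_cancel_left1)
qed

end

definition F3 :: "nat \<Rightarrow> complex mat \<Rightarrow> complex mat \<Rightarrow> complex mat \<Rightarrow> complex" where
  "F3 d X K Y = (\<Sum>k<d. \<Sum>i<d. \<Sum>j<d. cnj (X $$ (i,k)) * K $$ (i,j) * Y $$ (j,k))"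

lemma F3_eq:
  assumes "X \<in> carrier_mat d d" "K \<in> carrier_mat d d" "Y \<in> carrier_mat d d"
  shows "mtrace (adj X * K * Y) = F3 d X K Y"
proof -
  have "mtrace (adj X * K * Y) = (\<Sum>k<d. \<Sum>j<d. (\<Sum>i<d. cnj (X $$ (i,k)) * K $$ (i,j)) * Y $$ (j,k))"
    using assms by (simp add: mtrace_def)
  also have "\<dots> = (\<Sum>k<d. \<Sum>j<d. \<Sum>i<d. cnj (X $$ (i,k)) * K $$ (i,j) * Y $$ (j,k))"
    by (simp add: sum_distrib_right)
  also have "\<dots> = F3 d X K Y"
    unfolding F3_def by (rule sum.cong[OF refl], rule sum.swap)
  finally show ?thesis .
qed

lemma F3_expand:
  assumes "X \<in> carrier_mat d d" "Y \<in> carrier_mat d d"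
  shows "F3 d (X - t \<cdot>\<^sub>m Y) K (X - t \<cdot>\<^sub>m Y)
    = F3 d X K X - t * F3 d X K Y - cnj t * F3 d Y K X + cnj t * t * F3 d Y K Y"
proof -
  have "F3 d (X - t \<cdot>\<^sub>m Y) K (X - t \<cdot>\<^sub>m Y) = (\<Sum>k<d. \<Sum>i<d. \<Sum>j<d.
      cnj (X $$ (i,k)) * K $$ (i,j) * X $$ (j,k) - t * (cnj (X $$ (i,k)) * K $$ (i,j) * Y $$ (j,k))
      - cnj t * (cnj (Y $$ (i,k)) * K $$ (i,j) * X $$ (j,k)) + cnj t * t * (cnj (Y $$ (i,k)) * K $$ (i,j) * Y $$ (j,k)))"
    unfolding F3_def using assms by (intro sum.cong refl) (auto simp: algebra_simps)
  also have "\<dots> = F3 d X K X - t * F3 d X K Y - cnj t * F3 d Y K X + cnj t * t * F3 d Y K Y"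
    unfolding F3_def by (simp add: sum.distrib sum_subtractf sum_distrib_left)
  finally show ?thesis .
qed

definition herm :: "nat \<Rightarrow> complex mat \<Rightarrow> bool" where
  "herm d K \<longleftrightarrow> K \<in> carrier_mat d d \<and> adj K = K"

definition psd :: "nat \<Rightarrow> complex mat \<Rightarrow> bool" where
  "psd d K \<longleftrightarrow> (\<forall>X\<in>carrier_mat d d. Re (mtrace (adj X * K * X)) \<ge> 0)"

lemma herm_cnj:
  assumes "herm d K" "X \<in> carrier_mat d d" "Y \<in> carrier_mat d d"
  shows "cnj (mtrace (adj X * K * Y)) = mtrace (adj Y * K * X)"
proof -
  have K: "K \<in> carrier_mat d d" "adj K = K" using assms(1) by (auto simp: herm_def)
  have "cnj (mtrace (adj X * K * Y)) = mtrace (adj (adj X * K * Y))"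
    using assms K by (intro cnj_mtrace) auto
  also have "adj (adj X * K * Y) = adj Y * adj (adj X * K)"
    using assms K by (intro adj_mult[of _ d d]) auto
  also have "adj (adj X * K) = adj K * X" using assms K by (subst adj_mult[of _ d d]) auto
  finally show ?thesis using K assms by (simp add: assoc_mult_mat[of _ d d _ d _ d])
qed

lemma qf_real:
  assumes "herm d K" "X \<in> carrier_mat d d"
  shows "Im (mtrace (adj X * K * X)) = 0"
proof -
  have "cnj (mtrace (adj X * K * X)) = mtrace (adj X * K * X)" using herm_cnj[OF assms assms(2)] .
  then have "Im (cnj (mtrace (adj X * K * X))) = Im (mtrace (adj X * K * X))" by simp
  then show ?thesis by simp
qed

lemma CS:
  assumes H: "herm d K" and P: "psd d K" and X: "X \<in> carrier_mat d d" and Y: "Y \<in> carrier_mat d d"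
  shows "(cmod (mtrace (adj X * K * Y)))\<^sup>2 \<le> Re (mtrace (adj X * K * X)) * Re (mtrace (adj Y * K * Y))"
proof -
  have K: "K \<in> carrier_mat d d" using H by (simp add: herm_def)
  define g where "g = mtrace (adj X * K * Y)"
  define a where "a = Re (mtrace (adj X * K * X))"
  define b where "b = Re (mtrace (adj Y * K * Y))"
  have a0: "a \<ge> 0" "b \<ge> 0" using P X Y unfolding psd_def a_def b_def by auto
  have gYX: "mtrace (adj Y * K * X) = cnj g" unfolding g_def using herm_cnj[OF H X Y] by simp
  have aX: "mtrace (adj X * K * X) = of_real a" using qf_real[OF H X] unfolding a_def by (simp add: complex_eq_iff)
  have bY: "mtrace (adj Y * K * Y) = of_real b" using qf_real[OF H Y] unfolding b_def by (simp add: complex_eq_iff)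
  have main: "0 \<le> a - 2 * s * (cmod g)\<^sup>2 + s\<^sup>2 * (cmod g)\<^sup>2 * b" for s :: real
  proof -
    define t where "t = of_real s * cnj g"
    have W: "X - t \<cdot>\<^sub>m Y \<in> carrier_mat d d" using X Y by (intro minus_carrier_mat) auto
    have "0 \<le> Re (mtrace (adj (X - t \<cdot>\<^sub>m Y) * K * (X - t \<cdot>\<^sub>m Y)))" using P W unfolding psd_def by auto
    also have "mtrace (adj (X - t \<cdot>\<^sub>m Y) * K * (X - t \<cdot>\<^sub>m Y)) = F3 d X K X - t * F3 d X K Y - cnj t * F3 d Y K X + cnj t * t * F3 d Y K Y"
      using F3_eq[OF W K W] F3_expand[OF X Y] by simp
    also have "\<dots> = of_real a - t * g - cnj t * cnj g + cnj t * t * of_real b"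
      using F3_eq[OF X K X] F3_eq[OF X K Y] F3_eq[OF Y K X] F3_eq[OF Y K Y] aX bY gYX g_def by simp
    also have "Re \<dots> = a - 2 * s * (cmod g)\<^sup>2 + s\<^sup>2 * (cmod g)\<^sup>2 * b"
      unfolding t_def cmod_power2 by (simp add: power2_eq_square algebra_simps)
    finally show ?thesis .
  qed
  show ?thesis
  proof (cases "b = 0")
    case True
    show ?thesis
    proof (cases "g = 0")
      case True then show ?thesis using a0 unfolding g_def a_def b_def by simp
    next
      case False
      then have gp: "(cmod g)\<^sup>2 > 0" by simp
      have "0 \<le> a - 2 * ((a + 1) / (2 * (cmod g)\<^sup>2)) * (cmod g)\<^sup>2"
        using main[of "(a + 1) / (2 * (cmod g)\<^sup>2)"] \<open>b = 0\<close> by simp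
      also have "\<dots> = -1" using gp by (simp add: field_simps)
      finally show ?thesis by simp
    qed
  next
    case False
    then have bp: "b > 0" using a0 by simp
    have "0 \<le> a - 2 * (1/b) * (cmod g)\<^sup>2 + (1/b)\<^sup>2 * (cmod g)\<^sup>2 * b" by (rule main)
    also have "\<dots> = a - (cmod g)\<^sup>2 / b" using bp by (simp add: field_simps power2_eq_square)
    finally have "(cmod g)\<^sup>2 \<le> a * b" using bp by (simp add: field_simps)
    then show ?thesis unfolding g_def a_def b_def .
  qed
qed

lemma psd_kernel:
  assumes H: "herm d K" and P: "psd d K" and X: "X \<in> carrier_mat d d"
    and z: "Re (mtrace (adj X * K * X)) = 0"
  shows "K * X = 0\<^sub>m d d"
proof -
  have K: "K \<in> carrier_mat d d" "adj K = K" using H by (auto simp: herm_def)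
  have KX: "K * X \<in> carrier_mat d d" using K X by simp
  have e: "adj (K * X) * K * X = adj (K * X) * (K * X)"
    using K X by (simp add: assoc_mult_mat[of _ d d _ d _ d])
  have "(cmod (mtrace (adj (K * X) * K * X)))\<^sup>2 \<le> Re (mtrace (adj (K*X) * K * (K*X))) * Re (mtrace (adj X * K * X))"
    by (rule CS[OF H P KX X])
  then have "(cmod (mtrace (adj (K * X) * (K * X))))\<^sup>2 \<le> 0" using z e by simp
  then have "mtrace (adj (K * X) * (K * X)) = 0" by simp
  then show ?thesis using mtrace_adj_self_zero[OF KX] by simp
qed

lemma bound_lemma:
  assumes M: "M \<in> carrier_mat d d"
  shows "\<exists>C>0. \<forall>Y\<in>carrier_mat d d. Re (mtrace (adj Y * M * Y)) \<le> C * Re (mtrace (adj Y * Y))"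
proof -
  define S where "S = (\<Sum>i<d. \<Sum>j<d. cmod (M $$ (i,j)))"
  have S0: "S \<ge> 0" unfolding S_def by (intro sum_nonneg) auto
  have Mij: "cmod (M $$ (i,j)) \<le> S" if "i < d" "j < d" for i j
  proof -
    have "cmod (M $$ (i,j)) \<le> (\<Sum>j<d. cmod (M $$ (i,j)))"
      using that by (intro member_le_sum) auto
    also have "\<dots> \<le> S" unfolding S_def using that by (intro member_le_sum[of i]) (auto intro: sum_nonneg)
    finally show ?thesis .
  qed
  show ?thesis
  proof (intro exI[of _ "2 * of_nat d * S + 1"] conjI ballI)
    show "0 < 2 * real d * S + 1" using S0 by (intro add_nonneg_pos mult_nonneg_nonneg) auto
    fix Y :: "complex mat" assume Y: "Y \<in> carrier_mat d d"
    define n where "n = (\<Sum>k<d. \<Sum>i<d. (cmod (Y $$ (i,k)))\<^sup>2)"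
    have n: "Re (mtrace (adj Y * Y)) = n" unfolding n_def using mtrace_adj_self[OF Y] by simp
    have n0: "n \<ge> 0" unfolding n_def by (intro sum_nonneg) auto
    have "Re (mtrace (adj Y * M * Y)) \<le> cmod (F3 d Y M Y)" using F3_eq[OF Y M Y] complex_Re_le_cmod by simp
    also have "\<dots> \<le> (\<Sum>k<d. \<Sum>i<d. \<Sum>j<d. cmod (Y $$ (i,k)) * cmod (M $$ (i,j)) * cmod (Y $$ (j,k)))"
      unfolding F3_def
      by (rule order.trans[OF norm_sum], rule sum_mono, rule order.trans[OF norm_sum], rule sum_mono,
          rule order.trans[OF norm_sum], rule sum_mono) (simp add: norm_mult)
    also have "\<dots> \<le> (\<Sum>k<d. \<Sum>i<d. \<Sum>j<d. S * ((cmod (Y $$ (i,k)))\<^sup>2 + (cmod (Y $$ (j,k)))\<^sup>2))"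
    proof (intro sum_mono)
      fix k i j assume "k \<in> {..<d}" "i \<in> {..<d}" "j \<in> {..<d}"
      then have ij: "i < d" "j < d" by auto
      let ?a = "cmod (Y $$ (i,k))" and ?b = "cmod (Y $$ (j,k))"
      have ab: "?a * ?b \<le> ?a\<^sup>2 + ?b\<^sup>2"
      proof -
        have "0 \<le> (?a - ?b)\<^sup>2" by simp
        then have "2 * (?a * ?b) \<le> ?a\<^sup>2 + ?b\<^sup>2" by (simp add: power2_eq_square algebra_simps)
        moreover have "0 \<le> ?a * ?b" by simp
        ultimately show ?thesis by linarith
      qed
      have "?a * cmod (M $$ (i,j)) * ?b = cmod (M $$ (i,j)) * (?a * ?b)" by simp
      also have "\<dots> \<le> S * (?a * ?b)" using Mij[OF ij] by (intro mult_right_mono) auto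
      also have "\<dots> \<le> S * (?a\<^sup>2 + ?b\<^sup>2)" using ab S0 by (intro mult_left_mono) auto
      finally show "?a * cmod (M $$ (i,j)) * ?b \<le> S * (?a\<^sup>2 + ?b\<^sup>2)" .
    qed
    also have "\<dots> = S * (\<Sum>k<d. \<Sum>i<d. \<Sum>j<d. (cmod (Y $$ (i,k)))\<^sup>2) + S * (\<Sum>k<d. \<Sum>i<d. \<Sum>j<d. (cmod (Y $$ (j,k)))\<^sup>2)"
      by (simp add: sum.distrib sum_distrib_left algebra_simps)
    also have "(\<Sum>k<d. \<Sum>i<d. \<Sum>j<d. (cmod (Y $$ (i,k)))\<^sup>2) = of_nat d * n"
      unfolding n_def by (simp add: sum_distrib_left)
    also have "(\<Sum>k<d. \<Sum>i<d. \<Sum>j<d. (cmod (Y $$ (j,k)))\<^sup>2) = of_nat d * n"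
      unfolding n_def by (simp add: sum_distrib_left)
    also have "S * (of_nat d * n) + S * (of_nat d * n) \<le> (2 * real d * S + 1) * n"
      using n0 S0 by (simp add: algebra_simps)
    finally show "Re (mtrace (adj Y * M * Y)) \<le> (2 * real d * S + 1) * Re (mtrace (adj Y * Y))"
      using n by simp
  qed
qed

lemma msum_minus:
  assumes "\<forall>i\<in>I. G i \<in> carrier_mat d d"
  shows "msum d F I - msum d G I = msum d (\<lambda>i. F i - G i) I"
proof (rule eq_matI)
  fix r s assume "r < dim_row (msum d (\<lambda>i. F i - G i) I)" "s < dim_col (msum d (\<lambda>i. F i - G i) I)"
  then have rs: "r < d" "s < d" by auto
  have "(\<Sum>i\<in>I. (F i - G i) $$ (r,s)) = (\<Sum>i\<in>I. F i $$ (r,s) - G i $$ (r,s))"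
    using assms rs by (intro sum.cong) auto
  then show "(msum d F I - msum d G I) $$ (r, s) = msum d (\<lambda>i. F i - G i) I $$ (r, s)"
    using rs by (simp add: sum_subtractf)
qed auto

lemma sandwich_shift:
  assumes B: "B \<in> carrier_mat d d" and K: "K \<in> carrier_mat d d"
  shows "B * (K - c \<cdot>\<^sub>m 1\<^sub>m d) * adj B = B * K * adj B - c \<cdot>\<^sub>m (B * adj B)"
proof -
  have "B * (K - c \<cdot>\<^sub>m 1\<^sub>m d) = B * K - c \<cdot>\<^sub>m B"
    using B K by (subst mult_minus_distrib_mat[of _ d d]) auto
  moreover have "(B * K - c \<cdot>\<^sub>m B) * adj B = B * K * adj B - c \<cdot>\<^sub>m (B * adj B)"
    using B K by (subst minus_mult_distrib_mat[of _ d d]) (auto simp: mult_smult_assoc_mat[of _ d d _ d])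
  ultimately show ?thesis by simp
qed

lemma qf_shift:
  assumes X: "X \<in> carrier_mat d d" and K: "K \<in> carrier_mat d d"
  shows "mtrace (adj X * (K - c \<cdot>\<^sub>m 1\<^sub>m d) * X) = mtrace (adj X * K * X) - c * mtrace (adj X * X)"
proof -
  have "adj X * (K - c \<cdot>\<^sub>m 1\<^sub>m d) = adj X * K - c \<cdot>\<^sub>m adj X"
    using X K by (subst mult_minus_distrib_mat[of _ d d]) auto
  moreover have "(adj X * K - c \<cdot>\<^sub>m adj X) * X = adj X * K * X - c \<cdot>\<^sub>m (adj X * X)"
    using X K by (subst minus_mult_distrib_mat[of _ d d]) (auto simp: mult_smult_assoc_mat[of _ d d _ d])
  ultimately show ?thesis using X K by (simp add: mtrace_minus[of _ d] mtrace_smult[of _ d])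
qed

lemma fixed_point_scalar:
  assumes d: "0 < d" and B: "carr d N B" and spB: "spans d N B l"
    and canB: "msum d (\<lambda>i. B i * adj (B i)) {1..N} = 1\<^sub>m d"
    and H: "herm d K" and Ps: "psd d K"
    and fx: "msum d (\<lambda>i. B i * K * adj (B i)) {1..N} = K"
  shows "\<exists>c::real. K = of_real c \<cdot>\<^sub>m 1\<^sub>m d"
proof -
  have K: "K \<in> carrier_mat d d" "adj K = K" using H by (auto simp: herm_def)
  have Bi: "\<And>i. i \<in> {1..N} \<Longrightarrow> B i \<in> carrier_mat d d" using B by (auto simp: carr_def)
  define S where "S = {t::real. \<forall>X\<in>carrier_mat d d. t * Re (mtrace (adj X * X)) \<le> Re (mtrace (adj X * K * X))}"
  have S0: "0 \<in> S" using Ps unfolding S_def psd_def by auto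
  have Sb: "t \<le> Re (mtrace K) / of_nat d" if "t \<in> S" for t
  proof -
    have "t * Re (mtrace (adj (1\<^sub>m d) * 1\<^sub>m d)) \<le> Re (mtrace (adj (1\<^sub>m d) * K * 1\<^sub>m d))"
      using that unfolding S_def by (intro bspec[of _ _ "1\<^sub>m d"]) auto
    moreover have "adj (1\<^sub>m d) * K * 1\<^sub>m d = K" using K by simp
    ultimately have "t * of_nat d \<le> Re (mtrace K)" by simp
    then show ?thesis using d by (simp add: field_simps)
  qed
  have bdd: "bdd_above S" using Sb by (intro bdd_aboveI[of S "Re (mtrace K) / of_nat d"]) auto
  define lam where "lam = Sup S"
  have lamS: "lam \<in> S"
    unfolding S_def
  proof (intro CollectI ballI)
    fix X :: "complex mat" assume X: "X \<in> carrier_mat d d"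
    define n where "n = Re (mtrace (adj X * X))"
    define q where "q = Re (mtrace (adj X * K * X))"
    have n0: "n \<ge> 0" unfolding n_def using mtrace_adj_self_Re[OF X] by simp
    have q0: "q \<ge> 0" unfolding q_def using Ps X by (auto simp: psd_def)
    show "lam * Re (mtrace (adj X * X)) \<le> Re (mtrace (adj X * K * X))"
    proof (cases "n = 0")
      case True then show ?thesis using q0 unfolding n_def q_def by simp
    next
      case False
      then have np: "n > 0" using n0 by simp
      have "\<And>t. t \<in> S \<Longrightarrow> t \<le> q / n"
        using X np unfolding S_def n_def q_def by (auto simp: field_simps)
      then have "lam \<le> q / n" unfolding lam_def using S0 by (intro cSup_least) auto
      then show ?thesis using np unfolding n_def[symmetric] q_def[symmetric] by (simp add: field_simps)
    qed
  qed
  define K' where "K' = K - of_real lam \<cdot>\<^sub>m 1\<^sub>m d"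
  have K'c: "K' \<in> carrier_mat d d" unfolding K'_def using K by (intro minus_carrier_mat) auto
  have HK': "herm d K'" unfolding herm_def K'_def using K
    by (auto intro!: minus_carrier_mat simp: adj_minus[of _ d d] adj_smult)
  have qK': "mtrace (adj X * K' * X) = mtrace (adj X * K * X) - of_real lam * mtrace (adj X * X)"
    if "X \<in> carrier_mat d d" for X
    unfolding K'_def by (rule qf_shift[OF that K(1)])
  have PK': "psd d K'" unfolding psd_def
  proof
    fix X :: "complex mat" assume X: "X \<in> carrier_mat d d"
    have "lam * Re (mtrace (adj X * X)) \<le> Re (mtrace (adj X * K * X))" using lamS X unfolding S_def by auto
    then show "0 \<le> Re (mtrace (adj X * K' * X))" using qK'[OF X] by simp
  qed
  have fxK': "msum d (\<lambda>i. B i * K' * adj (B i)) {1..N} = K'"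
  proof -
    have "msum d (\<lambda>i. B i * K' * adj (B i)) {1..N}
        = msum d (\<lambda>i. B i * K * adj (B i) - of_real lam \<cdot>\<^sub>m (B i * adj (B i))) {1..N}"
      unfolding K'_def using Bi K by (intro msum_cong sandwich_shift) auto
    also have "\<dots> = msum d (\<lambda>i. B i * K * adj (B i)) {1..N} - msum d (\<lambda>i. of_real lam \<cdot>\<^sub>m (B i * adj (B i))) {1..N}"
      using Bi by (subst msum_minus) auto
    also have "msum d (\<lambda>i. of_real lam \<cdot>\<^sub>m (B i * adj (B i))) {1..N} = of_real lam \<cdot>\<^sub>m msum d (\<lambda>i. B i * adj (B i)) {1..N}"
      using Bi by (subst msum_smult) auto
    finally show ?thesis using fx canB unfolding K'_def by simp
  qed
  show ?thesis
  proof (cases "det K' = 0")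
    case True
    obtain v where v: "v \<in> carrier_vec d" "v \<noteq> 0\<^sub>v d" "K' *\<^sub>v v = 0\<^sub>v d"
      using det_0_iff_vec_prod_zero[OF K'c] True by auto
    obtain j where j: "j < d" "v $ j \<noteq> 0" using v(1,2) by (metis carrier_vecD eq_vecI index_zero_vec(1,2))
    define X0 where "X0 = mat d d (\<lambda>(i,k). if k = 0 then v $ i else (0::complex))"
    have X0c: "X0 \<in> carrier_mat d d" by (simp add: X0_def)
    have aX0: "adj X0 \<noteq> 0\<^sub>m d d"
    proof
      assume "adj X0 = 0\<^sub>m d d"
      then have "adj X0 $$ (0,j) = 0" using j d by simp
      then show False using j d by (simp add: X0_def)
    qed
    have KX0: "K' * X0 = 0\<^sub>m d d"
    proof (rule eq_matI)
      fix x k assume "x < dim_row (0\<^sub>m d d :: complex mat)" "k < dim_col (0\<^sub>m d d :: complex mat)"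
      then have xk: "x < d" "k < d" by auto
      have "(K' *\<^sub>v v) $ x = (\<Sum>t<d. K' $$ (x,t) * v $ t)"
        using xk v(1) K'c by (simp add: scalar_prod_def lessThan_atLeast0)
      then have "(\<Sum>t<d. K' $$ (x,t) * v $ t) = 0" using v(3) xk by simp
      then show "(K' * X0) $$ (x,k) = 0\<^sub>m d d $$ (x,k)"
        using xk K'c by (cases "k = 0") (simp_all add: X0_def scalar_prod_def lessThan_atLeast0)
    qed (use K'c X0c in auto)
    have step: "K' * (adj (B i) * X) = 0\<^sub>m d d"
      if i: "i \<in> {1..N}" and X: "X \<in> carrier_mat d d" and KX: "K' * X = 0\<^sub>m d d" for i X
    proof -
      have q0: "mtrace (adj X * K' * X) = 0"
        using KX X K'c by (simp add: assoc_mult_mat[of _ d d _ d _ d])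
      have Yc: "\<And>i. i \<in> {1..N} \<Longrightarrow> adj (B i) * X \<in> carrier_mat d d" using Bi X by simp
      have e: "adj X * (B i * K' * adj (B i)) * X = adj (adj (B i) * X) * K' * (adj (B i) * X)" if "i \<in> {1..N}" for i
        using Bi[OF that] X K'c by (simp add: adj_mult[of _ d d _ d] assoc_mult_mat[of _ d d _ d _ d])
      have "0 = mtrace (adj X * msum d (\<lambda>i. B i * K' * adj (B i)) {1..N} * X)" using q0 fxK' by simp
      also have "adj X * msum d (\<lambda>i. B i * K' * adj (B i)) {1..N} * X
          = msum d (\<lambda>i. adj X * (B i * K' * adj (B i)) * X) {1..N}"
        using Bi X K'c by (simp add: mult_msum[of _ d] msum_mult[of _ d])
      also have "mtrace \<dots> = (\<Sum>i\<in>{1..N}. mtrace (adj (adj (B i) * X) * K' * (adj (B i) * X)))"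
        using Bi X K'c e by (subst mtrace_msum) auto
      finally have s0: "(\<Sum>i\<in>{1..N}. Re (mtrace (adj (adj (B i) * X) * K' * (adj (B i) * X)))) = 0"
        by (metis Re_sum zero_complex.simps(1))
      have "\<forall>i\<in>{1..N}. Re (mtrace (adj (adj (B i) * X) * K' * (adj (B i) * X))) = 0"
        using s0 PK' Yc by (subst (asm) sum_nonneg_eq_0_iff) (auto simp: psd_def)
      then show ?thesis using psd_kernel[OF HK' PK' Yc[OF i]] i by auto
    qed
    have wstep: "\<forall>X\<in>carrier_mat d d. K' * X = 0\<^sub>m d d \<longrightarrow> K' * (adj (wprod d B w) * X) = 0\<^sub>m d d"
      if "set w \<subseteq> {1..N}" for w
      using that
    proof (induction w)
      case Nil then show ?case by simp
    next
      case (Cons i w)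
      have i: "i \<in> {1..N}" and w: "set w \<subseteq> {1..N}" using Cons.prems by auto
      have W: "wprod d B w \<in> carrier_mat d d" using carr_wprod'[OF B w] .
      show ?case
      proof (intro ballI impI)
        fix X assume X: "X \<in> carrier_mat d d" and KX: "K' * X = 0\<^sub>m d d"
        have "adj (wprod d B (i # w)) * X = adj (wprod d B w) * (adj (B i) * X)"
          using Bi[OF i] W X by (simp add: adj_mult[of _ d d _ d] assoc_mult_mat[of _ d d _ d _ d])
        then show "K' * (adj (wprod d B (i # w)) * X) = 0\<^sub>m d d"
          using Cons.IH[OF w] step[OF i X KX] Bi[OF i] X by simp
      qed
    qed
    have "K' = 0\<^sub>m d d"
    proof (rule sandwich_zero[OF _ K'c aX0])
      show "adj X0 \<in> carrier_mat d d" using X0c by simp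
      fix M :: "complex mat" assume M: "M \<in> carrier_mat d d"
      obtain b where b: "M = comb d N B l b" using spB M unfolding spans_def by blast
      have WB: "\<And>w. w \<in> words N l \<Longrightarrow> wprod d B w \<in> carrier_mat d d" using carr_wprod[OF B] by auto
      have z: "adj X0 * (wprod d B w * K') = 0\<^sub>m d d" if w: "w \<in> words N l" for w
      proof -
        have ws: "set w \<subseteq> {1..N}" using w by (simp add: words_def)
        have "K' * (adj (wprod d B w) * X0) = 0\<^sub>m d d" using wstep[OF ws] X0c KX0 by blast
        then have "adj (K' * (adj (wprod d B w) * X0)) = 0\<^sub>m d d" by simp
        moreover have "adj (K' * (adj (wprod d B w) * X0)) = adj X0 * (wprod d B w * K')"
          using WB[OF w] X0c K'c HK' unfolding herm_def
          by (simp add: adj_mult[of _ d d _ d] assoc_mult_mat[of _ d d _ d _ d])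
        ultimately show ?thesis by simp
      qed
      have "adj X0 * M * K' = adj X0 * (comb d N B l b * K')"
        using b X0c K'c by (simp add: assoc_mult_mat[of _ d d _ d _ d])
      also have "\<dots> = msum d (\<lambda>w. adj X0 * (b w \<cdot>\<^sub>m (wprod d B w * K'))) (words N l)"
        using comb_mult_right[OF B K'c] X0c WB K'c by (simp, subst mult_msum[of _ d]) (auto intro!: smult_carrier_mat)
      also have "\<dots> = 0\<^sub>m d d"
        using z X0c WB K'c by (intro msum_zero) (simp add: mult_smult_distrib[of _ d d _ d])
      finally show "adj X0 * M * K' = 0\<^sub>m d d" .
    qed
    then have "K = of_real lam \<cdot>\<^sub>m 1\<^sub>m d"
    proof -
      assume K'0: "K' = 0\<^sub>m d d"
      show ?thesis
      proof (rule eq_matI)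
        fix x y assume "x < dim_row (of_real lam \<cdot>\<^sub>m 1\<^sub>m d :: complex mat)" "y < dim_col (of_real lam \<cdot>\<^sub>m 1\<^sub>m d :: complex mat)"
        then have xy: "x < d" "y < d" by auto
        have "K' $$ (x,y) = 0" using K'0 xy by simp
        then show "K $$ (x,y) = (of_real lam \<cdot>\<^sub>m 1\<^sub>m d) $$ (x,y)" using xy K unfolding K'_def by simp
      qed (use K in auto)
    qed
    then show ?thesis by blast
  next
    case False
    obtain M0 where M0: "M0 \<in> carrier_mat d d" "K' * M0 = 1\<^sub>m d" "M0 * K' = 1\<^sub>m d"
      using det_non_zero_imp_unit[OF K'c False, unfolded Units_def ring_mat_def] by auto
    have aM0: "adj M0 = M0"
    proof -
      have "adj M0 * K' = 1\<^sub>m d"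
        using HK' M0 unfolding herm_def by (metis adj_mult adj_one)
      then have "adj M0 = adj M0 * (K' * M0)" using M0 by simp
      also have "\<dots> = (adj M0 * K') * M0" using M0 K'c by (simp add: assoc_mult_mat[of _ d d _ d _ d])
      also have "\<dots> = M0" using \<open>adj M0 * K' = 1\<^sub>m d\<close> M0 by simp
      finally show ?thesis .
    qed
    obtain C where C: "C > 0" "\<And>Y. Y \<in> carrier_mat d d \<Longrightarrow> Re (mtrace (adj Y * M0 * Y)) \<le> C * Re (mtrace (adj Y * Y))"
      using bound_lemma[OF M0(1)] by blast
    have "lam + 1 / C \<in> S"
      unfolding S_def
    proof (intro CollectI ballI)
      fix Y :: "complex mat" assume Y: "Y \<in> carrier_mat d d"
      define n where "n = Re (mtrace (adj Y * Y))"
      define q where "q = Re (mtrace (adj Y * K' * Y))"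
      have n0: "n \<ge> 0" unfolding n_def using mtrace_adj_self_Re[OF Y] by simp
      have q0: "q \<ge> 0" unfolding q_def using PK' Y by (auto simp: psd_def)
      have nq: "n \<le> C * q"
      proof (cases "n = 0")
        case True then show ?thesis using q0 C by simp
      next
        case False
        then have np: "n > 0" using n0 by simp
        define Z where "Z = M0 * Y"
        have Zc: "Z \<in> carrier_mat d d" unfolding Z_def using M0 Y by simp
        have aZ: "adj Z = adj Y * M0" unfolding Z_def using M0 Y aM0 by (simp add: adj_mult[of _ d d _ d])
        have e1: "mtrace (adj Z * K' * Y) = mtrace (adj Y * Y)"
          using aZ M0 Y K'c by (simp add: assoc_mult_mat[of _ d d _ d _ d])
        have e2: "mtrace (adj Z * K' * Z) = mtrace (adj Y * M0 * Y)"
          using aZ M0 Y K'c unfolding Z_def by (simp add: assoc_mult_mat[of _ d d _ d _ d])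
        have tr: "mtrace (adj Y * Y) = of_real n"
          unfolding n_def using mtrace_adj_self_Re[OF Y] by (simp add: complex_eq_iff)
        have "n\<^sup>2 \<le> Re (mtrace (adj Z * K' * Z)) * q"
          using CS[OF HK' PK' Zc Y] e1 tr n0 unfolding q_def by simp
        also have "\<dots> \<le> (C * n) * q" using e2 C(2)[OF Y] q0 unfolding n_def by (simp add: mult_right_mono)
        finally have "n * n \<le> n * (C * q)" by (simp add: power2_eq_square algebra_simps)
        then show ?thesis using np by simp
      qed
      have "Re (mtrace (adj Y * K * Y)) = q + lam * n"
        using qK'[OF Y] unfolding q_def n_def by simp
      moreover have "(lam + 1 / C) * n \<le> q + lam * n"
        using nq C(1) by (simp add: field_simps)
      ultimately show "(lam + 1 / C) * Re (mtrace (adj Y * Y)) \<le> Re (mtrace (adj Y * K * Y))"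
        unfolding n_def by simp
    qed
    then have "lam + 1 / C \<le> lam" unfolding lam_def using bdd by (intro cSup_upper)
    then show ?thesis using C(1) by simp
  qed
qed

lemma exp_Arg: "cmod z = 1 \<Longrightarrow> exp (\<i> * of_real (Arg z)) = z"
proof -
  assume z: "cmod z = 1"
  then have "z \<noteq> 0" by auto
  then have "cis (Arg z) = sgn z" by (rule cis_Arg)
  then show ?thesis using z by (simp add: cis_conv_exp sgn_eq)
qed

context fund begin

lemma cc_sq: "cc * cnj cc = 1"
  using cc_norm by (metis complex_norm_square mult.commute of_real_1 power_one)

definition "K = T * adj T"

lemma K_carrier[simp]: "K \<in> carrier_mat d d" by (simp add: K_def)

lemma K_herm: "herm d K"
  unfolding herm_def K_def using T_carrier by (simp add: adj_mult[of _ d d _ d])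

lemma K_psd: "psd d K"
  unfolding psd_def
proof
  fix X :: "complex mat" assume X: "X \<in> carrier_mat d d"
  have "adj X * K * X = adj (adj T * X) * (adj T * X)"
    unfolding K_def using X T_carrier by (simp add: adj_mult[of _ d d _ d] assoc_mult_mat[of _ d d _ d _ d])
  then show "0 \<le> Re (mtrace (adj X * K * X))" using mtrace_adj_self_Re[of "adj T * X" d d] X T_carrier by simp
qed

lemma K_fixed: "msum d (\<lambda>i. B i * K * adj (B i)) {1..N} = K"
proof -
  have "msum d (\<lambda>i. B i * K * adj (B i)) {1..N} = msum d (\<lambda>i. T * (A i * adj (A i)) * adj T) {1..N}"
  proof (rule msum_cong)
    fix i assume i: "i \<in> {1..N}"
    have Ai: "A i \<in> carrier_mat d d" and Bi: "B i \<in> carrier_mat d d" using Ai_carrier[OF i] Bi_carrier[OF i] .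
    have "B i * K * adj (B i) = (B i * T) * adj (B i * T)"
      unfolding K_def using Bi T_carrier by (simp add: adj_mult[of _ d d _ d] assoc_mult_mat[of _ d d _ d _ d])
    also have "\<dots> = (cc \<cdot>\<^sub>m (T * A i)) * (cnj cc \<cdot>\<^sub>m adj (T * A i))" using BiT[OF i] by (simp add: adj_smult)
    also have "\<dots> = (cc * cnj cc) \<cdot>\<^sub>m ((T * A i) * adj (T * A i))"
      using Ai T_carrier by (simp add: mult_smult_assoc_mat[of _ d d _ d] mult_smult_distrib[of _ d d _ d] smult_smult_mat' mult.commute[of "cnj cc" cc])
    also have "\<dots> = T * (A i * adj (A i)) * adj T"
      using Ai T_carrier cc_sq by (simp add: adj_mult[of _ d d _ d] assoc_mult_mat[of _ d d _ d _ d])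
    finally show "B i * K * adj (B i) = T * (A i * adj (A i)) * adj T" .
  qed
  also have "\<dots> = T * msum d (\<lambda>i. A i * adj (A i)) {1..N} * adj T"
    using Ai_carrier T_carrier by (simp add: mult_msum[of _ d] msum_mult[of _ d])
  also have "\<dots> = K" using canA unfolding K_def by simp
  finally show ?thesis .
qed

lemma fund_result: "\<exists>V \<beta>. unitary_mat d V \<and> (\<forall>i\<in>{1..N}. B i = exp (\<i> * of_real \<beta>) \<cdot>\<^sub>m (adj V * A i * V))"
proof -
  obtain c0 :: real where c0: "K = of_real c0 \<cdot>\<^sub>m 1\<^sub>m d"
    using fixed_point_scalar[OF d B spB canB K_herm K_psd K_fixed] by blast
  have trK: "mtrace K = of_real c0 * of_nat d" using c0 by (simp add: mtrace_smult[of _ d])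
  have "mtrace K = mtrace (adj (adj T) * adj T)" unfolding K_def by simp
  moreover have "mtrace (adj (adj T) * adj T) \<noteq> 0"
  proof
    assume "mtrace (adj (adj T) * adj T) = 0"
    then have "adj T = 0\<^sub>m d d" using mtrace_adj_self_zero[of "adj T" d d] T_carrier by simp
    then have "adj (adj T) = 0\<^sub>m d d" by simp
    then show False using a0(2) by simp
  qed
  moreover have "Re (mtrace (adj (adj T) * adj T)) \<ge> 0" "Im (mtrace (adj (adj T) * adj T)) = 0"
    using mtrace_adj_self_Re[of "adj T" d d] T_carrier by auto
  ultimately have "Re (mtrace K) \<ge> 0" "mtrace K \<noteq> 0" by auto
  then have c0p: "c0 > 0"
  proof -
    assume a: "Re (mtrace K) \<ge> 0" "mtrace K \<noteq> 0"
    have "Re (mtrace K) = c0 * real d" using trK by simp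
    moreover have "c0 \<noteq> 0" using trK a(2) by auto
    ultimately show ?thesis using a(1) d by (simp add: zero_le_mult_iff)
  qed
  define s where "s = 1 / sqrt c0"
  have s2: "s * (s * c0) = 1" using c0p unfolding s_def by (simp add: field_simps)
  have s3: "s * c0 * s = 1" using s2 by (metis mult.commute mult.assoc)
  define V where "V = of_real s \<cdot>\<^sub>m adj T"
  have Vc: "V \<in> carrier_mat d d" unfolding V_def by simp
  have aV: "adj V = of_real s \<cdot>\<^sub>m T" unfolding V_def by (simp add: adj_smult)
  have TT: "T * adj T = of_real c0 \<cdot>\<^sub>m 1\<^sub>m d" using c0 unfolding K_def .
  have aT: "adj T = of_real c0 \<cdot>\<^sub>m Ti"
  proof -
    have "Ti * (T * adj T) = adj T" using Ti T_carrier by (simp add: assoc_mult_mat[of _ d d _ d _ d, symmetric])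
    moreover have "Ti * (T * adj T) = of_real c0 \<cdot>\<^sub>m Ti" using TT Ti by simp
    ultimately show ?thesis by simp
  qed
  have TaT: "adj T * T = of_real c0 \<cdot>\<^sub>m 1\<^sub>m d"
    using aT Ti by (simp add: mult_smult_assoc_mat[of _ d d _ d])
  have u1: "adj V * V = 1\<^sub>m d"
    unfolding aV unfolding V_def using TT T_carrier s2
    by (simp add: mult_smult_assoc_mat[of _ d d _ d] mult_smult_distrib[of _ d d _ d] smult_smult_mat')
      (simp add: of_real_mult[symmetric] del: of_real_mult)
  have u2: "V * adj V = 1\<^sub>m d"
    unfolding aV unfolding V_def using TaT T_carrier s2
    by (simp add: mult_smult_assoc_mat[of _ d d _ d] mult_smult_distrib[of _ d d _ d] smult_smult_mat')
      (simp add: of_real_mult[symmetric] del: of_real_mult)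
  have Bi: "B i = cc \<cdot>\<^sub>m (adj V * A i * V)" if i: "i \<in> {1..N}" for i
  proof -
    have Ai: "A i \<in> carrier_mat d d" and Bic: "B i \<in> carrier_mat d d" using Ai_carrier[OF i] Bi_carrier[OF i] .
    have "B i = B i * T * Ti" using Bic Ti by (simp add: assoc_mult_mat[of _ d d _ d _ d])
    also have "\<dots> = cc \<cdot>\<^sub>m (T * A i * Ti)" using BiT[OF i] Ai Ti by (simp add: mult_smult_assoc_mat[of _ d d _ d])
    also have "T * A i * Ti = adj V * A i * V"
      unfolding aV unfolding V_def aT using Ai Ti s3
      by (simp add: mult_smult_assoc_mat[of _ d d _ d] mult_smult_distrib[of _ d d _ d] smult_smult_mat')
        (simp add: of_real_mult[symmetric] del: of_real_mult)
    finally show ?thesis .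
  qed
  show ?thesis
  proof (intro exI[of _ V] exI[of _ "Arg cc"] conjI ballI)
    show "unitary_mat d V" unfolding unitary_mat_def using Vc u1 u2 by simp
    fix i assume "i \<in> {1..N}"
    then show "B i = exp (\<i> * of_real (Arg cc)) \<cdot>\<^sub>m (adj V * A i * V)"
      using Bi exp_Arg[OF cc_norm] by simp
  qed
qed

end

lemma unitaryD: assumes "unitary_mat d U"
  shows "U \<in> carrier_mat d d" "adj U * U = 1\<^sub>m d" "U * adj U = 1\<^sub>m d"
  using assms by (auto simp: unitary_mat_def)

lemma unitary_cancel:
  assumes "unitary_mat d U" "X \<in> carrier_mat d c"
  shows "U * (adj U * X) = X" "adj U * (U * X) = X"
proof -
  note U = unitaryD[OF assms(1)]
  have "U * (adj U * X) = (U * adj U) * X" using U(1) assms(2) by (simp add: assoc_mult_mat[of _ d d _ d _ c])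
  also have "\<dots> = X" using U(3) assms(2) by simp
  finally show "U * (adj U * X) = X" .
  have "adj U * (U * X) = (adj U * U) * X" using U(1) assms(2) by (simp add: assoc_mult_mat[of _ d d _ d _ c])
  also have "\<dots> = X" using U(2) assms(2) by simp
  finally show "adj U * (U * X) = X" .
qed

lemma unitary_adj_mult:
  assumes "unitary_mat d V" "unitary_mat d U"
  shows "unitary_mat d (adj V * U)"
proof -
  note V = unitaryD[OF assms(1)] and U = unitaryD[OF assms(2)]
  have a: "adj (adj V * U) = adj U * V" using V U by (simp add: adj_mult[of _ d d _ d])
  have "adj U * V * (adj V * U) = adj U * (V * (adj V * U))"
    using V U by (simp add: assoc_mult_mat[of _ d d _ d _ d])
  also have "\<dots> = 1\<^sub>m d" using unitary_cancel[OF assms(1) U(1)] U by simp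
  finally have 1: "adj U * V * (adj V * U) = 1\<^sub>m d" .
  have "adj V * U * (adj U * V) = adj V * (U * (adj U * V))"
    using V U by (simp add: assoc_mult_mat[of _ d d _ d _ d])
  also have "\<dots> = 1\<^sub>m d" using unitary_cancel[OF assms(2) V(1)] V by simp
  finally have 2: "adj V * U * (adj U * V) = 1\<^sub>m d" .
  show ?thesis unfolding unitary_mat_def a using V U 1 2 by simp
qed

lemma sigma_sq: "sigmaz_tensor_id n * sigmaz_tensor_id n = 1\<^sub>m (2*n)"
proof (rule eq_matI)
  fix i j assume "i < dim_row (1\<^sub>m (2*n) :: complex mat)" "j < dim_col (1\<^sub>m (2*n) :: complex mat)"
  then have ij: "i < 2*n" "j < 2*n" by auto
  have "(sigmaz_tensor_id n * sigmaz_tensor_id n) $$ (i,j)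
      = (\<Sum>t<2*n. (if i = t then (if i < n then 1 else -1) else 0) * (if t = j then (if t < n then 1 else -1) else 0))"
    using ij by (simp add: sigmaz_tensor_id_def scalar_prod_def lessThan_atLeast0)
  also have "\<dots> = (\<Sum>t<2*n. if t = i then (if i = j then 1 else 0) else (0::complex))"
    by (intro sum.cong) auto
  also have "\<dots> = 1\<^sub>m (2*n) $$ (i,j)" using ij by simp
  finally show "(sigmaz_tensor_id n * sigmaz_tensor_id n) $$ (i,j) = 1\<^sub>m (2*n) $$ (i,j)" .
qed (auto simp: sigmaz_tensor_id_def)

lemma sigma_carrier[simp]: "sigmaz_tensor_id n \<in> carrier_mat (2*n) (2*n)"
  by (simp add: sigmaz_tensor_id_def)

lemma grading_sq:
  assumes "grading_matrix N n par A Z"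
  shows "Z \<in> carrier_mat (2*n) (2*n)" "Z * Z = 1\<^sub>m (2*n)"
proof -
  show Zc: "Z \<in> carrier_mat (2*n) (2*n)" using assms by (simp add: grading_matrix_def)
  obtain U where U: "unitary_mat (2*n) U" "Z = U * sigmaz_tensor_id n * adj U"
    using assms unfolding grading_matrix_def by blast
  note Ud = unitaryD[OF U(1)]
  let ?s = "sigmaz_tensor_id n"
  have sc: "?s * (?s * X) = X" if "X \<in> carrier_mat (2*n) (2*n)" for X
    using that sigma_sq by (simp add: assoc_mult_mat[of _ "2*n" "2*n" _ "2*n" _ "2*n", symmetric])
  have "Z * Z = U * (?s * (adj U * (U * (?s * adj U))))"
    unfolding U(2) using Ud by (simp add: assoc_mult_mat[of _ "2*n" "2*n" _ "2*n" _ "2*n"])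
  also have "\<dots> = U * (?s * (?s * adj U))"
    using Ud unitary_cancel(2)[OF U(1), of "?s * adj U" "2*n"] by simp
  also have "\<dots> = 1\<^sub>m (2*n)" using Ud sc[of "adj U"] by simp
  finally show "Z * Z = 1\<^sub>m (2*n)" .
qed

lemma neg_eq_smult: "- (Z :: complex mat) = (-1) \<cdot>\<^sub>m Z"
  by (rule eq_matI) auto

lemma wall_form:
  assumes "wall_matrix N n par A u"
  shows "\<exists>Z \<sigma>. grading_matrix N n par A Z \<and> \<sigma> \<in> {1, -1::complex} \<and> u = \<sigma> \<cdot>\<^sub>m Z"
proof -
  obtain Z where Z: "grading_matrix N n par A Z" "u = Z \<or> u = - Z" using assms unfolding wall_matrix_def by blast
  show ?thesis
  proof (cases "u = Z")
    case True then show ?thesis using Z(1) by (intro exI[of _ Z] exI[of _ 1]) auto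
  next
    case False then have "u = (-1) \<cdot>\<^sub>m Z" using Z(2) neg_eq_smult by auto
    then show ?thesis using Z(1) by (intro exI[of _ Z] exI[of _ "-1"]) auto
  qed
qed

lemma wall_sq:
  assumes "wall_matrix N n par A u"
  shows "u \<in> carrier_mat (2*n) (2*n)" "u * u = 1\<^sub>m (2*n)"
proof -
  obtain Z \<sigma> where Z: "grading_matrix N n par A Z" "\<sigma> \<in> {1, -1}" "u = \<sigma> \<cdot>\<^sub>m Z"
    using wall_form[OF assms] by blast
  note G = grading_sq[OF Z(1)]
  show "u \<in> carrier_mat (2*n) (2*n)" using Z(3) G by simp
  have "u * u = (\<sigma> * \<sigma>) \<cdot>\<^sub>m (Z * Z)"
    using Z(3) G by (simp add: mult_smult_assoc_mat[of _ "2*n" "2*n" _ "2*n"] mult_smult_distrib[of _ "2*n" "2*n" _ "2*n"] smult_smult_mat')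
  then show "u * u = 1\<^sub>m (2*n)" using Z(2) G by auto
qed

lemma twisted_span:
  assumes B: "carr d N B" and sp: "spans d N B L" and X: "X \<in> carrier_mat d d"
    and tw: "\<And>i. i \<in> {1..N} \<Longrightarrow> B i * X = \<omega> \<cdot>\<^sub>m (X * B i)"
    and M: "M \<in> carrier_mat d d"
  shows "M * X = (\<omega> ^ L) \<cdot>\<^sub>m (X * M)"
proof -
  have Bi: "\<And>i. i \<in> {1..N} \<Longrightarrow> B i \<in> carrier_mat d d" using B by (auto simp: carr_def)
  have w: "wprod d B w * X = (\<omega> ^ length w) \<cdot>\<^sub>m (X * wprod d B w)" if "set w \<subseteq> {1..N}" for w
    using that
  proof (induction w)
    case Nil then show ?case using X by simp
  next
    case (Cons i w)
    have i: "i \<in> {1..N}" and ws: "set w \<subseteq> {1..N}" using Cons.prems by auto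
    have W: "wprod d B w \<in> carrier_mat d d" using carr_wprod'[OF B ws] .
    have "wprod d B (i # w) * X = B i * (wprod d B w * X)"
      using Bi[OF i] W X by (simp add: assoc_mult_mat[of _ d d _ d _ d])
    also have "\<dots> = (\<omega> ^ length w) \<cdot>\<^sub>m ((B i * X) * wprod d B w)"
      using Cons.IH[OF ws] Bi[OF i] W X by (simp add: mult_smult_distrib[of _ d d _ d] assoc_mult_mat[of _ d d _ d _ d])
    also have "\<dots> = (\<omega> ^ length (i # w)) \<cdot>\<^sub>m (X * wprod d B (i # w))"
      using tw[OF i] Bi[OF i] W X
      by (simp add: mult_smult_assoc_mat[of _ d d _ d] smult_smult_mat' assoc_mult_mat[of _ d d _ d _ d] mult.commute)
    finally show ?case .
  qed
  obtain b where b: "M = comb d N B L b" using sp M unfolding spans_def by blast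
  have WB: "\<And>w. w \<in> words N L \<Longrightarrow> wprod d B w \<in> carrier_mat d d" using carr_wprod[OF B] by auto
  have "M * X = msum d (\<lambda>w. b w \<cdot>\<^sub>m (wprod d B w * X)) (words N L)"
    unfolding b by (rule comb_mult_right[OF B X])
  also have "\<dots> = msum d (\<lambda>w. (\<omega> ^ L) \<cdot>\<^sub>m (b w \<cdot>\<^sub>m (X * wprod d B w))) (words N L)"
  proof (rule msum_cong)
    fix v assume v: "v \<in> words N L"
    then have "set v \<subseteq> {1..N}" "length v = L" by (auto simp: words_def)
    then show "b v \<cdot>\<^sub>m (wprod d B v * X) = (\<omega> ^ L) \<cdot>\<^sub>m (b v \<cdot>\<^sub>m (X * wprod d B v))"
      using w by (simp add: smult_smult_mat' mult.commute)
  qed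
  also have "\<dots> = (\<omega> ^ L) \<cdot>\<^sub>m msum d (\<lambda>w. b w \<cdot>\<^sub>m (X * wprod d B w)) (words N L)"
    using WB X by (subst msum_smult) auto
  also have "msum d (\<lambda>w. b w \<cdot>\<^sub>m (X * wprod d B w)) (words N L) = X * M"
    unfolding b by (rule mult_comb[OF B X, symmetric])
  finally show ?thesis .
qed

lemma gt_wprod:
  assumes gt: "gauge_transform N n A B V \<beta>" and A: "carr (2*n) N A" and w: "set w \<subseteq> {1..N}"
  shows "wprod (2*n) B w = (exp (\<i> * of_real \<beta>) ^ length w) \<cdot>\<^sub>m (adj V * wprod (2*n) A w * V)"
  using w
proof (induction w)
  case Nil
  have V: "unitary_mat (2*n) V" using gt by (simp add: gauge_transform_def)
  then show ?case using unitaryD[OF V] by simp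
next
  case (Cons i w)
  have i: "i \<in> {1..N}" and ws: "set w \<subseteq> {1..N}" using Cons.prems by auto
  have V: "unitary_mat (2*n) V" and Bi: "B i = exp (\<i> * of_real \<beta>) \<cdot>\<^sub>m (adj V * A i * V)"
    using gt i by (auto simp: gauge_transform_def)
  note Vd = unitaryD[OF V]
  have Ai: "A i \<in> carrier_mat (2*n) (2*n)" using A i by (auto simp: carr_def)
  have Aw: "wprod (2*n) A w \<in> carrier_mat (2*n) (2*n)" using carr_wprod'[OF A ws] .
  let ?e = "exp (\<i> * of_real \<beta>)"
  have "wprod (2*n) B (i # w) = (?e \<cdot>\<^sub>m (adj V * A i * V)) * ((?e ^ length w) \<cdot>\<^sub>m (adj V * wprod (2*n) A w * V))"
    using Cons.IH[OF ws] Bi by simp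
  also have "\<dots> = (?e ^ length w * ?e) \<cdot>\<^sub>m (adj V * (A i * (V * (adj V * (wprod (2*n) A w * V)))))"
    using Vd Ai Aw
    by (simp add: mult_smult_assoc_mat[of _ "2*n" "2*n" _ "2*n"] mult_smult_distrib[of _ "2*n" "2*n" _ "2*n"]
        smult_smult_mat' assoc_mult_mat[of _ "2*n" "2*n" _ "2*n" _ "2*n"])
  also have "V * (adj V * (wprod (2*n) A w * V)) = wprod (2*n) A w * V"
    using unitary_cancel(1)[OF V, of "wprod (2*n) A w * V" "2*n"] Aw Vd by simp
  finally show ?case
    using Vd Ai Aw by (simp add: assoc_mult_mat[of _ "2*n" "2*n" _ "2*n" _ "2*n"] power_Suc2 del: power_Suc)
qed

lemma trace_conj:
  assumes V: "unitary_mat d V" and X: "X \<in> carrier_mat d d"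
  shows "mtrace (adj V * X * V) = mtrace X"
proof -
  note Vd = unitaryD[OF V]
  have "mtrace (adj V * X * V) = mtrace (adj V * (X * V))"
    using Vd X by (simp add: assoc_mult_mat[of _ d d _ d _ d])
  also have "\<dots> = mtrace ((X * V) * adj V)" using Vd X by (intro mtrace_mult_comm[of _ d d]) auto
  also have "(X * V) * adj V = X" using Vd X by (simp add: assoc_mult_mat[of _ d d _ d _ d])
  finally show ?thesis .
qed

lemma exp_cancel: "exp (\<i> * of_real (- (\<beta> * real L))) * exp (\<i> * of_real \<beta>) ^ L = 1"
proof -
  have "exp (\<i> * of_real \<beta>) ^ L = exp (of_nat L * (\<i> * of_real \<beta>))" by (rule exp_of_nat_mult[symmetric])
  then show ?thesis by (simp add: mult_exp_exp[symmetric] algebra_simps exp_minus_inverse del: mult_exp_exp)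
qed

lemma gt_gauge_equiv:
  assumes gt: "gauge_transform N n A B V \<beta>" and A: "carr (2*n) N A"
  shows "gauge_equiv N n A B"
  unfolding gauge_equiv_def
proof
  fix L :: nat
  show "\<exists>\<alpha>::real. \<forall>w\<in>words N L. mtrace (wprod (2*n) A w) = exp (\<i> * of_real \<alpha>) * mtrace (wprod (2*n) B w)"
  proof (intro exI[of _ "- (\<beta> * real L)"] ballI)
    fix w assume w: "w \<in> words N L"
    have ws: "set w \<subseteq> {1..N}" and len: "length w = L" using w by (auto simp: words_def)
    have V: "unitary_mat (2*n) V" using gt by (simp add: gauge_transform_def)
    have Aw: "wprod (2*n) A w \<in> carrier_mat (2*n) (2*n)" using carr_wprod'[OF A ws] .
    have "mtrace (wprod (2*n) B w) = exp (\<i> * of_real \<beta>) ^ L * mtrace (wprod (2*n) A w)"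
      using gt_wprod[OF gt A ws] len unitaryD[OF V] Aw trace_conj[OF V Aw]
      by (simp add: mtrace_smult[of _ "2*n"])
    then show "mtrace (wprod (2*n) A w) = exp (\<i> * of_real (- (\<beta> * real L))) * mtrace (wprod (2*n) B w)"
      using exp_cancel[of \<beta> L] by (simp add: mult.assoc[symmetric])
  qed
qed

lemma gt_PBC:
  assumes gt: "gauge_transform N n A B V \<beta>" and A: "carr (2*n) N A" and F: "fMPS N n par A"
  shows "gauge_equiv_PBC N n par A B"
proof -
  let ?d = "2*n"
  obtain Z where Z: "grading_matrix N n par A Z" using F unfolding fMPS_def by blast
  obtain U where U: "unitary_mat ?d U" "Z = U * sigmaz_tensor_id n * adj U"
    using Z unfolding grading_matrix_def by blast
  have V: "unitary_mat ?d V" using gt by (simp add: gauge_transform_def)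
  note Vd = unitaryD[OF V] and Ud = unitaryD[OF U(1)]
  have Zc: "Z \<in> carrier_mat ?d ?d" using grading_sq[OF Z] by simp
  define v where "v = adj V * Z * V"
  have vc: "v \<in> carrier_mat ?d ?d" unfolding v_def using Vd Zc by simp
  let ?e = "exp (\<i> * of_real \<beta>)"
  have Bi: "\<And>i. i \<in> {1..N} \<Longrightarrow> B i = ?e \<cdot>\<^sub>m (adj V * A i * V)" using gt by (simp add: gauge_transform_def)
  have Ai: "\<And>i. i \<in> {1..N} \<Longrightarrow> A i \<in> carrier_mat ?d ?d" using A by (simp add: carr_def)
  have wA: "wall_matrix N n par A Z" unfolding wall_matrix_def using Z by blast
  have gB: "grading_matrix N n par B v"
    unfolding grading_matrix_def
  proof (intro conjI ballI)
    show "v \<in> carrier_mat ?d ?d" by (rule vc)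
    show "\<exists>U. unitary_mat ?d U \<and> v = U * sigmaz_tensor_id n * adj U"
    proof (intro exI[of _ "adj V * U"] conjI)
      show "unitary_mat ?d (adj V * U)" by (rule unitary_adj_mult[OF V U(1)])
      show "v = adj V * U * sigmaz_tensor_id n * adj (adj V * U)"
        unfolding v_def U(2) using Vd Ud
        by (simp add: adj_mult[of _ ?d ?d _ ?d] assoc_mult_mat[of _ ?d ?d _ ?d _ ?d])
    qed
    fix i assume i: "i \<in> {1..N}"
    have par: "(-1) ^ par i \<cdot>\<^sub>m A i = Z * A i * Z" using Z i unfolding grading_matrix_def by blast
    have "v * B i * v = ?e \<cdot>\<^sub>m (adj V * (Z * (V * (adj V * (A i * (V * (adj V * (Z * V))))))))"
      unfolding v_def Bi[OF i] using Vd Zc Ai[OF i]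
      by (simp add: mult_smult_assoc_mat[of _ ?d ?d _ ?d] mult_smult_distrib[of _ ?d ?d _ ?d] assoc_mult_mat[of _ ?d ?d _ ?d _ ?d])
    also have "V * (adj V * (Z * V)) = Z * V" using unitary_cancel(1)[OF V, of "Z * V" ?d] Zc Vd by simp
    also have "V * (adj V * (A i * (Z * V))) = A i * (Z * V)"
      using unitary_cancel(1)[OF V, of "A i * (Z * V)" ?d] Zc Vd Ai[OF i] by simp
    also have "adj V * (Z * (A i * (Z * V))) = adj V * (Z * A i * Z) * V"
      using Vd Zc Ai[OF i] by (simp add: assoc_mult_mat[of _ ?d ?d _ ?d _ ?d])
    also have "\<dots> = (-1) ^ par i \<cdot>\<^sub>m (adj V * A i * V)"
      unfolding par[symmetric] using Vd Ai[OF i]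
      by (simp add: mult_smult_assoc_mat[of _ ?d ?d _ ?d] mult_smult_distrib[of _ ?d ?d _ ?d])
    finally show "(-1) ^ par i \<cdot>\<^sub>m B i = v * B i * v"
      unfolding Bi[OF i] by (simp add: smult_smult_mat' mult.commute)
  qed
  have wB: "wall_matrix N n par B v" unfolding wall_matrix_def using gB by blast
  have "\<forall>L. \<exists>\<alpha>::real. \<forall>w\<in>words N L. mtrace (Z * wprod ?d A w) = exp (\<i> * of_real \<alpha>) * mtrace (v * wprod ?d B w)"
  proof
    fix L :: nat
    show "\<exists>\<alpha>::real. \<forall>w\<in>words N L. mtrace (Z * wprod ?d A w) = exp (\<i> * of_real \<alpha>) * mtrace (v * wprod ?d B w)"
    proof (intro exI[of _ "- (\<beta> * real L)"] ballI)
      fix w assume w: "w \<in> words N L"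
      have ws: "set w \<subseteq> {1..N}" and len: "length w = L" using w by (auto simp: words_def)
      have Aw: "wprod ?d A w \<in> carrier_mat ?d ?d" using carr_wprod'[OF A ws] .
      have "v * wprod ?d B w = (?e ^ L) \<cdot>\<^sub>m (adj V * (Z * (V * (adj V * (wprod ?d A w * V)))))"
        unfolding v_def gt_wprod[OF gt A ws] len using Vd Zc Aw
        by (simp add: mult_smult_distrib[of _ ?d ?d _ ?d] assoc_mult_mat[of _ ?d ?d _ ?d _ ?d])
      also have "V * (adj V * (wprod ?d A w * V)) = wprod ?d A w * V"
        using unitary_cancel(1)[OF V, of "wprod ?d A w * V" ?d] Aw Vd by simp
      also have "adj V * (Z * (wprod ?d A w * V)) = adj V * (Z * wprod ?d A w) * V"
        using Vd Zc Aw by (simp add: assoc_mult_mat[of _ ?d ?d _ ?d _ ?d])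
      finally have "mtrace (v * wprod ?d B w) = ?e ^ L * mtrace (Z * wprod ?d A w)"
        using trace_conj[OF V, of "Z * wprod ?d A w"] Zc Aw Vd by (simp add: mtrace_smult[of _ ?d])
      then show "mtrace (Z * wprod ?d A w) = exp (\<i> * of_real (- (\<beta> * real L))) * mtrace (v * wprod ?d B w)"
        using exp_cancel[of \<beta> L] by (simp add: mult.assoc[symmetric])
    qed
  qed
  then show ?thesis unfolding gauge_equiv_PBC_def using wA wB by blast
qed

lemma nonzero_entry:
  fixes W :: "complex mat"
  assumes "W \<in> carrier_mat d d" "W \<noteq> 0\<^sub>m d d"
  shows "\<exists>a b. a < d \<and> b < d \<and> W $$ (a,b) \<noteq> 0"
  using assms by (metis carrier_matD(1,2) eq_matI index_zero_mat(1,2,3))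

lemma uniqueness:
  assumes d: "0 < d" and d2: "d = 2*n" and A: "carr d N A" and sp: "spans d N A l"
    and can: "msum d (\<lambda>i. A i * adj (A i)) {1..N} = 1\<^sub>m d"
    and g1: "gauge_transform N n A B V \<beta>" and g2: "gauge_transform N n A B V' \<beta>'"
  shows "exp (\<i> * of_real \<beta>) = exp (\<i> * of_real \<beta>') \<and> (\<exists>\<theta>::real. V' = exp (\<i> * of_real \<theta>) \<cdot>\<^sub>m V)"
proof -
  let ?e = "exp (\<i> * of_real \<beta>)" and ?e' = "exp (\<i> * of_real \<beta>')"
  have V: "unitary_mat d V" and V': "unitary_mat d V'" using g1 g2 d2 by (auto simp: gauge_transform_def)
  note Vd = unitaryD[OF V] and V'd = unitaryD[OF V']
  have Ai: "\<And>i. i \<in> {1..N} \<Longrightarrow> A i \<in> carrier_mat d d" using A by (simp add: carr_def)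
  have eq: "?e \<cdot>\<^sub>m (adj V * A i * V) = ?e' \<cdot>\<^sub>m (adj V' * A i * V')" if "i \<in> {1..N}" for i
  proof -
    have "B i = ?e \<cdot>\<^sub>m (adj V * A i * V)" using g1 that unfolding gauge_transform_def by blast
    moreover have "B i = ?e' \<cdot>\<^sub>m (adj V' * A i * V')" using g2 that unfolding gauge_transform_def by blast
    ultimately show ?thesis by simp
  qed
  define W where "W = V * adj V'"
  have Wc: "W \<in> carrier_mat d d" unfolding W_def using Vd V'd by simp
  have WW: "W * adj W = 1\<^sub>m d"
  proof -
    have "W * adj W = V * (adj V' * (V' * adj V))"
      unfolding W_def using Vd V'd by (simp add: adj_mult[of _ d d _ d] assoc_mult_mat[of _ d d _ d _ d])
    also have "\<dots> = 1\<^sub>m d" using unitary_cancel(2)[OF V', of "adj V" d] Vd by simp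
    finally show ?thesis .
  qed
  have W0: "W \<noteq> 0\<^sub>m d d"
  proof
    assume "W = 0\<^sub>m d d"
    then have "(1\<^sub>m d :: complex mat) $$ (0,0) = (0\<^sub>m d d * adj (0\<^sub>m d d :: complex mat)) $$ (0,0)" using WW by simp
    then show False using d by simp
  qed
  have enz: "?e \<noteq> 0" by simp
  define \<omega> where "\<omega> = ?e' / ?e"
  have tw: "A i * W = \<omega> \<cdot>\<^sub>m (W * A i)" if i: "i \<in> {1..N}" for i
  proof -
    have "V * (?e \<cdot>\<^sub>m (adj V * A i * V)) * adj V' = V * (?e' \<cdot>\<^sub>m (adj V' * A i * V')) * adj V'"
      using eq[OF i] by simp
    moreover have "V * (?e \<cdot>\<^sub>m (adj V * A i * V)) * adj V' = ?e \<cdot>\<^sub>m (V * (adj V * (A i * (V * adj V'))))"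
      using Vd V'd Ai[OF i] by (simp add: mult_smult_assoc_mat[of _ d d _ d] mult_smult_distrib[of _ d d _ d] assoc_mult_mat[of _ d d _ d _ d])
    moreover have "V * (adj V * (A i * (V * adj V'))) = A i * W"
      unfolding W_def using unitary_cancel(1)[OF V, of "A i * (V * adj V')" d] Vd V'd Ai[OF i] by simp
    moreover have "V * (?e' \<cdot>\<^sub>m (adj V' * A i * V')) * adj V' = ?e' \<cdot>\<^sub>m (V * (adj V' * (A i * (V' * adj V'))))"
      using Vd V'd Ai[OF i] by (simp add: mult_smult_assoc_mat[of _ d d _ d] mult_smult_distrib[of _ d d _ d] assoc_mult_mat[of _ d d _ d _ d])
    moreover have "V * (adj V' * (A i * (V' * adj V'))) = W * A i"
      unfolding W_def using Vd V'd Ai[OF i] by (simp add: assoc_mult_mat[of _ d d _ d _ d])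
    ultimately have "?e \<cdot>\<^sub>m (A i * W) = ?e' \<cdot>\<^sub>m (W * A i)" by simp
    then have "(1 / ?e) \<cdot>\<^sub>m (?e \<cdot>\<^sub>m (A i * W)) = (1 / ?e) \<cdot>\<^sub>m (?e' \<cdot>\<^sub>m (W * A i))" by simp
    then show ?thesis using enz unfolding \<omega>_def by (simp add: smult_smult_mat')
  qed
  have sp': "spans d N A (Suc l)" using spans_Suc[OF A can sp] .
  have comm: "M * W = (\<omega> ^ Suc l) \<cdot>\<^sub>m (W * M)" if "M \<in> carrier_mat d d" for M
    by (rule twisted_span[OF A sp' Wc tw that])
  obtain a b where ab: "a < d" "b < d" "W $$ (a,b) \<noteq> 0" using nonzero_entry[OF Wc W0] by blast
  have "1\<^sub>m d * W = (\<omega> ^ Suc l) \<cdot>\<^sub>m (W * 1\<^sub>m d)" using comm[of "1\<^sub>m d"] by simp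
  then have "W = (\<omega> ^ Suc l) \<cdot>\<^sub>m W" using Wc by simp
  then have "W $$ (a,b) = \<omega> ^ Suc l * W $$ (a,b)" using ab Wc by (metis carrier_matD(1,2) index_smult_mat(1))
  then have om: "\<omega> ^ Suc l = 1" using ab(3) by simp
  define s where "s = W $$ (0,0)"
  have Wsc: "W = s \<cdot>\<^sub>m 1\<^sub>m d"
    unfolding s_def by (rule commute_scalar[OF Wc d]) (use comm om Wc in simp)
  have s0: "s \<noteq> 0"
  proof
    assume "s = 0"
    then have "W = 0\<^sub>m d d" using Wsc by simp
    then show False using W0 by simp
  qed
  have "\<omega> = 1"
  proof (rule ccontr)
    assume om1: "\<omega> \<noteq> 1"
    have Az: "A i = 0\<^sub>m d d" if i: "i \<in> {1..N}" for i
    proof -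
      have "A i * W = s \<cdot>\<^sub>m A i" "W * A i = s \<cdot>\<^sub>m A i" using Wsc Ai[OF i] by simp_all
      then have "s \<cdot>\<^sub>m A i = (\<omega> * s) \<cdot>\<^sub>m A i" using tw[OF i] by (simp add: smult_smult_mat')
      then have "\<And>x y. x < d \<Longrightarrow> y < d \<Longrightarrow> s * A i $$ (x,y) = \<omega> * s * A i $$ (x,y)"
        using Ai[OF i] by (metis carrier_matD(1,2) index_smult_mat(1))
      then have "\<And>x y. x < d \<Longrightarrow> y < d \<Longrightarrow> A i $$ (x,y) = 0" using s0 om1 by auto
      then show ?thesis using Ai[OF i] by (intro eq_matI) auto
    qed
    have Wz: "wprod d A w = 0\<^sub>m d d" if w: "w \<in> words N (Suc l)" for w
    proof -
      obtain i w' where iw: "w = i # w'" using w by (cases w) (auto simp: words_def)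
      have i: "i \<in> {1..N}" and w's: "set w' \<subseteq> {1..N}" using w iw by (auto simp: words_def)
      show ?thesis using iw Az[OF i] carr_wprod'[OF A w's] by simp
    qed
    obtain c where c: "1\<^sub>m d = comb d N A (Suc l) c"
      using bspec[OF sp'[unfolded spans_def], of "1\<^sub>m d"] by auto
    have "comb d N A (Suc l) c = 0\<^sub>m d d"
      unfolding comb_def by (rule msum_zero) (simp only: Wz smult_zero_mat)
    then have "(1\<^sub>m d :: complex mat) = 0\<^sub>m d d" using c by simp
    then have "(1\<^sub>m d :: complex mat) $$ (0,0) = (0\<^sub>m d d :: complex mat) $$ (0,0)" by (rule arg_cong)
    then show False using d by simp
  qed
  then have ee: "?e = ?e'" unfolding \<omega>_def using enz by (simp add: field_simps)
  have ss: "s * cnj s = 1"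
  proof -
    have "W * adj W = (s * cnj s) \<cdot>\<^sub>m 1\<^sub>m d" using Wsc by (simp add: adj_smult smult_smult_mat' mult.commute[of "cnj s" s])
    then have "((s * cnj s) \<cdot>\<^sub>m 1\<^sub>m d :: complex mat) $$ (0,0) = (1\<^sub>m d :: complex mat) $$ (0,0)" using WW by simp
    then show ?thesis using d by simp
  qed
  have VsV': "V = s \<cdot>\<^sub>m V'"
  proof -
    have "W * V' = V" unfolding W_def using Vd V'd by (simp add: assoc_mult_mat[of _ d d _ d _ d])
    then show ?thesis using Wsc V'd by simp
  qed
  have "V' = cnj s \<cdot>\<^sub>m V"
    using VsV' ss by (simp add: smult_smult_mat' mult.commute)
  moreover have "cmod (cnj s) = 1"
  proof -
    have "(cmod s)\<^sup>2 = 1" using ss complex_mod_mult_cnj[of s] by (metis norm_one power2_eq_square)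
    then show ?thesis using norm_ge_zero[of s] by (auto simp: power2_eq_1_iff)
  qed
  ultimately have "V' = exp (\<i> * of_real (Arg (cnj s))) \<cdot>\<^sub>m V" using exp_Arg by simp
  then show ?thesis using ee by blast
qed

lemma invol_cancel:
  assumes "Z \<in> carrier_mat d d" "Z * Z = 1\<^sub>m d" "X \<in> carrier_mat d c"
  shows "Z * (Z * X) = (X :: complex mat)"
proof -
  have e: "Z * Z * X = Z * (Z * X)" by (rule assoc_mult_mat[OF assms(1) assms(1) assms(3)])
  show ?thesis by (metis e assms(2) assms(3) left_mult_one_mat)
qed

lemma grading_comm:
  assumes G: "grading_matrix N n par A Z" and i: "i \<in> {1..N}" and Ai: "A i \<in> carrier_mat (2*n) (2*n)"
  shows "Z * A i = (-1) ^ par i \<cdot>\<^sub>m (A i * Z)"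
proof -
  note Zd = grading_sq[OF G]
  have par: "(-1) ^ par i \<cdot>\<^sub>m A i = Z * A i * Z" using G i unfolding grading_matrix_def by blast
  have "(-1) ^ par i \<cdot>\<^sub>m (A i * Z) = ((-1) ^ par i \<cdot>\<^sub>m A i) * Z"
    using Ai Zd by (simp add: mult_smult_assoc_mat[of _ "2*n" "2*n" _ "2*n"])
  also have "\<dots> = Z * A i * (Z * Z)" unfolding par using Ai Zd by (simp add: assoc_mult_mat[of _ "2*n" "2*n" _ "2*n" _ "2*n"])
  also have "\<dots> = Z * A i" using Ai Zd by simp
  finally show ?thesis by simp
qed

lemma wall_part:
  assumes d: "0 < 2*n" and B: "carr (2*n) N B" and spB: "spans (2*n) N B l" and A: "carr (2*n) N A"
    and gt: "gauge_transform N n A B V \<beta>"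
    and wu: "wall_matrix N n par A u" and wv: "wall_matrix N n par B v"
  shows "\<exists>\<eta>::complex. \<eta> \<in> {1, -1} \<and> v = \<eta> \<cdot>\<^sub>m (adj V * u * V)"
proof -
  let ?d = "2*n"
  obtain ZA \<sigma>u where ZA: "grading_matrix N n par A ZA" "\<sigma>u \<in> {1,-1}" "u = \<sigma>u \<cdot>\<^sub>m ZA" using wall_form[OF wu] by blast
  obtain ZB \<sigma>v where ZB: "grading_matrix N n par B ZB" "\<sigma>v \<in> {1,-1}" "v = \<sigma>v \<cdot>\<^sub>m ZB" using wall_form[OF wv] by blast
  note ZAd = grading_sq[OF ZA(1)] and ZBd = grading_sq[OF ZB(1)]
  have V: "unitary_mat ?d V" using gt by (simp add: gauge_transform_def)
  note Vd = unitaryD[OF V]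
  let ?e = "exp (\<i> * of_real \<beta>)"
  have Bi: "\<And>i. i \<in> {1..N} \<Longrightarrow> B i = ?e \<cdot>\<^sub>m (adj V * A i * V)" using gt by (simp add: gauge_transform_def)
  have Aic: "\<And>i. i \<in> {1..N} \<Longrightarrow> A i \<in> carrier_mat ?d ?d" using A by (simp add: carr_def)
  have Bic: "\<And>i. i \<in> {1..N} \<Longrightarrow> B i \<in> carrier_mat ?d ?d" using B by (simp add: carr_def)
  define Z' where "Z' = adj V * ZA * V"
  have Z'c: "Z' \<in> carrier_mat ?d ?d" unfolding Z'_def using Vd ZAd by simp
  have Z'Z': "Z' * Z' = 1\<^sub>m ?d"
  proof -
    have "Z' * Z' = adj V * (ZA * (V * (adj V * (ZA * V))))"
      unfolding Z'_def using Vd ZAd by (simp add: assoc_mult_mat[of _ ?d ?d _ ?d _ ?d])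
    also have "V * (adj V * (ZA * V)) = ZA * V" using unitary_cancel(1)[OF V, of "ZA * V" ?d] Vd ZAd by simp
    also have "ZA * (ZA * V) = V" using invol_cancel[of ZA ?d V ?d] ZAd Vd by simp
    finally show ?thesis using ZAd Vd by simp
  qed
  have Z'B: "Z' * B i = (-1) ^ par i \<cdot>\<^sub>m (B i * Z')" if i: "i \<in> {1..N}" for i
  proof -
    have "Z' * B i = ?e \<cdot>\<^sub>m (adj V * (ZA * (V * (adj V * (A i * V)))))"
      unfolding Z'_def Bi[OF i] using Vd ZAd Aic[OF i]
      by (simp add: mult_smult_distrib[of _ ?d ?d _ ?d] assoc_mult_mat[of _ ?d ?d _ ?d _ ?d])
    also have "V * (adj V * (A i * V)) = A i * V" using unitary_cancel(1)[OF V, of "A i * V" ?d] Vd Aic[OF i] by simp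
    also have "adj V * (ZA * (A i * V)) = adj V * (ZA * A i) * V"
      using Vd ZAd Aic[OF i] by (simp add: assoc_mult_mat[of _ ?d ?d _ ?d _ ?d])
    also have "ZA * A i = (-1) ^ par i \<cdot>\<^sub>m (A i * ZA)" by (rule grading_comm[OF ZA(1) i Aic[OF i]])
    also have "adj V * ((-1) ^ par i \<cdot>\<^sub>m (A i * ZA)) * V = (-1) ^ par i \<cdot>\<^sub>m (adj V * (A i * (ZA * V)))"
      using Vd ZAd Aic[OF i] by (simp add: mult_smult_distrib[of _ ?d ?d _ ?d] mult_smult_assoc_mat[of _ ?d ?d _ ?d] assoc_mult_mat[of _ ?d ?d _ ?d _ ?d])
    also have "A i * (ZA * V) = A i * (V * (adj V * (ZA * V)))"
      using unitary_cancel(1)[OF V, of "ZA * V" ?d] Vd ZAd by simp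
    finally show ?thesis
      unfolding Z'_def Bi[OF i] using Vd ZAd Aic[OF i]
      by (simp add: mult_smult_distrib[of _ ?d ?d _ ?d] mult_smult_assoc_mat[of _ ?d ?d _ ?d] assoc_mult_mat[of _ ?d ?d _ ?d _ ?d] smult_smult_mat' mult.commute)
  qed
  define X where "X = ZB * Z'"
  have Xc: "X \<in> carrier_mat ?d ?d" unfolding X_def using ZBd Z'c by simp
  have tw: "B i * X = 1 \<cdot>\<^sub>m (X * B i)" if i: "i \<in> {1..N}" for i
  proof -
    have pp: "((-1::complex) ^ par i) * ((-1) ^ par i) = 1" by (simp add: power_mult_distrib[symmetric])
    have "X * B i = ZB * (Z' * B i)" unfolding X_def using ZBd Z'c Bic[OF i] by (simp add: assoc_mult_mat[of _ ?d ?d _ ?d _ ?d])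
    also have "\<dots> = (-1) ^ par i \<cdot>\<^sub>m ((ZB * B i) * Z')"
      unfolding Z'B[OF i] using ZBd Z'c Bic[OF i] by (simp add: mult_smult_distrib[of _ ?d ?d _ ?d] assoc_mult_mat[of _ ?d ?d _ ?d _ ?d])
    also have "ZB * B i = (-1) ^ par i \<cdot>\<^sub>m (B i * ZB)" by (rule grading_comm[OF ZB(1) i Bic[OF i]])
    also have "(-1) ^ par i \<cdot>\<^sub>m (((-1) ^ par i \<cdot>\<^sub>m (B i * ZB)) * Z') = B i * X"
      unfolding X_def using ZBd Z'c Bic[OF i] pp
      by (simp add: mult_smult_assoc_mat[of _ ?d ?d _ ?d] smult_smult_mat' assoc_mult_mat[of _ ?d ?d _ ?d _ ?d])
    finally show ?thesis by simp
  qed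
  have comm: "M * X = X * M" if "M \<in> carrier_mat ?d ?d" for M
    using twisted_span[OF B spB Xc tw that] by simp
  define s where "s = X $$ (0,0)"
  have Xs: "X = s \<cdot>\<^sub>m 1\<^sub>m ?d" unfolding s_def by (rule commute_scalar[OF Xc d]) (use comm in simp)
  have ZBs: "ZB = s \<cdot>\<^sub>m Z'"
  proof -
    have "X * Z' = ZB" unfolding X_def using ZBd Z'c Z'Z' by (simp add: assoc_mult_mat[of _ ?d ?d _ ?d _ ?d])
    then show ?thesis using Xs Z'c by simp
  qed
  have "(s * s) \<cdot>\<^sub>m 1\<^sub>m ?d = 1\<^sub>m ?d"
  proof -
    have "ZB * ZB = (s * s) \<cdot>\<^sub>m (Z' * Z')" unfolding ZBs using Z'c
      by (simp add: mult_smult_assoc_mat[of _ ?d ?d _ ?d] mult_smult_distrib[of _ ?d ?d _ ?d] smult_smult_mat')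
    then show ?thesis using ZBd Z'Z' by simp
  qed
  then have "((s * s) \<cdot>\<^sub>m 1\<^sub>m ?d :: complex mat) $$ (0,0) = (1\<^sub>m ?d :: complex mat) $$ (0,0)" by (rule arg_cong)
  then have ss: "s * s = 1" using d by simp
  then have s1: "s \<in> {1, -1}" by (metis insertCI power2_eq_1_iff power2_eq_square singleton_iff)
  have uZ: "adj V * u * V = \<sigma>u \<cdot>\<^sub>m Z'"
    unfolding ZA(3) Z'_def using Vd ZAd by (simp add: mult_smult_assoc_mat[of _ ?d ?d _ ?d] mult_smult_distrib[of _ ?d ?d _ ?d])
  have su: "\<sigma>u * \<sigma>u = 1" using ZA(2) by auto
  show ?thesis
  proof (intro exI[of _ "\<sigma>v * s * \<sigma>u"] conjI)
    show "\<sigma>v * s * \<sigma>u \<in> {1, -1}" using ZB(2) s1 ZA(2) by auto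
    have "(\<sigma>v * s * \<sigma>u) \<cdot>\<^sub>m (adj V * u * V) = (\<sigma>v * s * (\<sigma>u * \<sigma>u)) \<cdot>\<^sub>m Z'"
      unfolding uZ by (simp add: smult_smult_mat' mult.assoc)
    also have "\<dots> = v" unfolding ZB(3) ZBs su by (simp add: smult_smult_mat')
    finally show "v = (\<sigma>v * s * \<sigma>u) \<cdot>\<^sub>m (adj V * u * V)" by simp
  qed
qed

theorem mainTheorem1:
  fixes N n :: nat and par :: "nat \<Rightarrow> nat" and A B :: "nat \<Rightarrow> complex mat"
  assumes "N \<ge> 1" and "n \<ge> 1"
    and "\<forall>i\<in>{1..N}. par i \<in> {0, 1}"
    and "fMPS N n par A" and "injective_plus N n A" and "canonical_form N n A"
    and "fMPS N n par B" and "injective_plus N n B" and "canonical_form N n B"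
  shows "(gauge_equiv N n A B \<longleftrightarrow> (\<exists>V \<beta>. gauge_transform N n A B V \<beta>))
    \<and> (gauge_equiv_PBC N n par A B \<longleftrightarrow> (\<exists>V \<beta>. gauge_transform N n A B V \<beta>))
    \<and> (\<forall>V \<beta> V' \<beta>'. gauge_transform N n A B V \<beta> \<and> gauge_transform N n A B V' \<beta>' \<longrightarrow>
          exp (\<i> * of_real \<beta>) = exp (\<i> * of_real \<beta>') \<and>
          (\<exists>\<theta>::real. V' = exp (\<i> * of_real \<theta>) \<cdot>\<^sub>m V))
    \<and> (\<forall>V \<beta> u v. gauge_transform N n A B V \<beta> \<and> wall_matrix N n par A u \<and> wall_matrix N n par B v \<longrightarrow>
          (\<exists>\<eta>::complex. \<eta> \<in> {1, -1} \<and> v = \<eta> \<cdot>\<^sub>m (adj V * u * V)))"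
proof -
  have d: "0 < 2*n" using assms(2) by simp
  have cA: "carr (2*n) N A" using assms(4) by (simp add: fMPS_def carr_def)
  have cB: "carr (2*n) N B" using assms(7) by (simp add: fMPS_def carr_def)
  have canA: "msum (2*n) (\<lambda>i. A i * adj (A i)) {1..N} = 1\<^sub>m (2*n)" using canonical_msum[OF assms(6)] .
  have canB: "msum (2*n) (\<lambda>i. B i * adj (B i)) {1..N} = 1\<^sub>m (2*n)" using canonical_msum[OF assms(9)] .
  obtain lA where lA: "spans (2*n) N A lA" using injective_plus_spans[OF assms(5) cA] by blast
  obtain lB where lB: "spans (2*n) N B lB" using injective_plus_spans[OF assms(8) cB] by blast
  define l where "l = max lA lB"
  have spA: "spans (2*n) N A l" using spans_mono[OF cA canA lA] unfolding l_def by simp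
  have spB: "spans (2*n) N B l" using spans_mono[OF cB canB lB] unfolding l_def by simp
  have fwd: "\<exists>V \<beta>. gauge_transform N n A B V \<beta>"
    if P: "P \<in> carrier_mat (2*n) (2*n)" and Q: "Q \<in> carrier_mat (2*n) (2*n)" and QQ: "Q * Q = 1\<^sub>m (2*n)"
      and P0: "P \<noteq> 0\<^sub>m (2*n) (2*n)"
      and tr: "\<forall>L. \<exists>\<alpha>::real. \<forall>w\<in>words N L. mtrace (P * wprod (2*n) A w) = exp (\<i> * of_real \<alpha>) * mtrace (Q * wprod (2*n) B w)"
    for P Q
  proof -
    obtain \<alpha> where \<alpha>: "\<And>L w. w \<in> words N L \<Longrightarrow> mtrace (P * wprod (2*n) A w) = exp (\<i> * of_real (\<alpha> L)) * mtrace (Q * wprod (2*n) B w)"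
      using tr by metis
    interpret F: fund "2*n" N A B P Q Q l \<alpha>
      using d cA cB canA canB spA spB P Q QQ P0 \<alpha> by unfold_locales auto
    show ?thesis using F.fund_result unfolding gauge_transform_def by blast
  qed
  have P1: "gauge_equiv N n A B \<longleftrightarrow> (\<exists>V \<beta>. gauge_transform N n A B V \<beta>)"
  proof
    assume ge: "gauge_equiv N n A B"
    have one0: "1\<^sub>m (2*n) \<noteq> (0\<^sub>m (2*n) (2*n) :: complex mat)"
    proof
      assume "1\<^sub>m (2*n) = (0\<^sub>m (2*n) (2*n) :: complex mat)"
      then have "(1\<^sub>m (2*n) :: complex mat) $$ (0,0) = (0\<^sub>m (2*n) (2*n) :: complex mat) $$ (0,0)" by (rule arg_cong)
      then show False using d by simp
    qed
    have "\<forall>L. \<exists>\<alpha>::real. \<forall>w\<in>words N L. mtrace (1\<^sub>m (2*n) * wprod (2*n) A w) = exp (\<i> * of_real \<alpha>) * mtrace (1\<^sub>m (2*n) * wprod (2*n) B w)"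
    proof
      fix L
      obtain \<alpha> :: real where "\<forall>w\<in>words N L. mtrace (wprod (2*n) A w) = exp (\<i> * of_real \<alpha>) * mtrace (wprod (2*n) B w)"
        using ge unfolding gauge_equiv_def by blast
      then show "\<exists>\<alpha>::real. \<forall>w\<in>words N L. mtrace (1\<^sub>m (2*n) * wprod (2*n) A w) = exp (\<i> * of_real \<alpha>) * mtrace (1\<^sub>m (2*n) * wprod (2*n) B w)"
        using carr_wprod[OF cA] carr_wprod[OF cB] by (intro exI[of _ \<alpha>]) (metis left_mult_one_mat)
    qed
    then show "\<exists>V \<beta>. gauge_transform N n A B V \<beta>" using fwd[of "1\<^sub>m (2*n)" "1\<^sub>m (2*n)"] one0 by simp
  next
    assume "\<exists>V \<beta>. gauge_transform N n A B V \<beta>"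
    then show "gauge_equiv N n A B" using gt_gauge_equiv[OF _ cA] by blast
  qed
  have P2: "gauge_equiv_PBC N n par A B \<longleftrightarrow> (\<exists>V \<beta>. gauge_transform N n A B V \<beta>)"
  proof
    assume "gauge_equiv_PBC N n par A B"
    then obtain u v where uv: "wall_matrix N n par A u" "wall_matrix N n par B v"
      "\<forall>L. \<exists>\<alpha>::real. \<forall>w\<in>words N L. mtrace (u * wprod (2*n) A w) = exp (\<i> * of_real \<alpha>) * mtrace (v * wprod (2*n) B w)"
      unfolding gauge_equiv_PBC_def by blast
    note u = wall_sq[OF uv(1)] and v = wall_sq[OF uv(2)]
    have u0: "u \<noteq> 0\<^sub>m (2*n) (2*n)"
    proof
      assume "u = 0\<^sub>m (2*n) (2*n)"
      then have "(1\<^sub>m (2*n) :: complex mat) = 0\<^sub>m (2*n) (2*n) * 0\<^sub>m (2*n) (2*n)" using u by simp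
      then have "(1\<^sub>m (2*n) :: complex mat) $$ (0,0) = (0\<^sub>m (2*n) (2*n) * 0\<^sub>m (2*n) (2*n) :: complex mat) $$ (0,0)" by (rule arg_cong)
      then show False using d by simp
    qed
    show "\<exists>V \<beta>. gauge_transform N n A B V \<beta>" by (rule fwd[OF u(1) v(1) v(2) u0 uv(3)])
  next
    assume "\<exists>V \<beta>. gauge_transform N n A B V \<beta>"
    then show "gauge_equiv_PBC N n par A B" using gt_PBC[OF _ cA assms(4)] by blast
  qed
  have P3: "\<forall>V \<beta> V' \<beta>'. gauge_transform N n A B V \<beta> \<and> gauge_transform N n A B V' \<beta>' \<longrightarrow>
          exp (\<i> * of_real \<beta>) = exp (\<i> * of_real \<beta>') \<and> (\<exists>\<theta>::real. V' = exp (\<i> * of_real \<theta>) \<cdot>\<^sub>m V)"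
    using uniqueness[OF d refl cA spA canA] by blast
  have P4: "\<forall>V \<beta> u v. gauge_transform N n A B V \<beta> \<and> wall_matrix N n par A u \<and> wall_matrix N n par B v \<longrightarrow>
          (\<exists>\<eta>::complex. \<eta> \<in> {1, -1} \<and> v = \<eta> \<cdot>\<^sub>m (adj V * u * V))"
    using wall_part[OF d cB spB cA] by blast
  show ?thesis using P1 P2 P3 P4 by blast
qed

end
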